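(* Let $\alpha(t)=(x(t),y(t))_{t\in T}$ be a decreasing path and $D=\{t-s:s,t\in T,\ t>s\}$. Then there exists a function $\varphi:D\to\mathbb{R}$ (necessarily nonnegative) with $$x(s)y(s)+x(t)y(t)-2x(s)y(t)=\varphi(t-s)\quad\text{for all } s,t\in T,\ s<t,$$ if and only if one of the following holds: (i) $x(t)=a,\ y(t)=b-ct$ for all $t\in T$, or $x(t)=b+ct,\ y(t)=a$ for all $t\in T$, for some $b\in\mathbb{R}$ and constants $a,c>0$; in both cases $\varphi(u)=acu$, $u\in D$. (ii) $x(t)=a+d(t-s^* )\mathbf{1}_{\{t>s^*\}}$, $y(t)=b-c(t-s^* )\mathbf{1}_{\{t\le s^*\}}$, $t\in T$, for some $s^*\in T^\circ$ and constants $a,b,c,d>0$ with $ac=bd$; in this case $\varphi(u)=acu$, $u\in D$. (iii) $x(t)=a+bt,\ y(t)=c-dt$, $t\in T$, for some $a,c\in\mathbb{R}$ and constants $b,d>0$; in this case $\varphi(u)=(ad+bc)u-bdu^2$, $u\in D$. (iv) $x(t)=ae^{ct},\ y(t)=be^{-ct}$, $t\in T$, for some constants $a,b,c>0$; in this case $\varphi(u)=2ab(1-e^{-cu})$, $u\in D$.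
   Context: $T\subseteq\mathbb{R}$ is an interval with interior $T^\circ$. A decreasing path is $\alpha(t)=(x(t),y(t))_{t\in T}$ with $x$ nondecreasing and $y$ nonincreasing continuous functions on $T$, both strictly positive on $T^\circ$, at least one not identically constant. *)

theory Defs
  imports "HOL-Analysis.Analysis"
begin

definition decreasing_path :: "real set \<Rightarrow> (real \<Rightarrow> real) \<Rightarrow> (real \<Rightarrow> real) \<Rightarrow> bool" where
  "decreasing_path T x y \<longleftrightarrow>
     is_interval T \<and>
     mono_on T x \<and> (\<forall>s\<in>T. \<forall>t\<in>T. s \<le> t \<longrightarrow> y t \<le> y s) \<and>
     continuous_on T x \<and> continuous_on T y \<and>
     (\<forall>t\<in>interior T. x t > 0 \<and> y t > 0) \<and>
     (\<not> (\<exists>k. \<forall>t\<in>T. x t = k) \<or> \<not> (\<exists>k. \<forall>t\<in>T. y t = k))"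

definition path_eq :: "real set \<Rightarrow> (real \<Rightarrow> real) \<Rightarrow> (real \<Rightarrow> real) \<Rightarrow> (real \<Rightarrow> real) \<Rightarrow> bool" where
  "path_eq T x y \<phi> \<longleftrightarrow>
     (\<forall>s\<in>T. \<forall>t\<in>T. s < t \<longrightarrow> x s * y s + x t * y t - 2 * x s * y t = \<phi> (t - s))"

end

theory Submission
  imports Defs
begin


lemma mid_le0:
  fixes g :: "real \<Rightarrow> real"
  assumes pq: "p < q" and cont: "continuous_on {p..q} g"
    and gp: "g p = 0" and gq: "g q = 0"
    and mid: "\<And>a b. a \<in> {p..q} \<Longrightarrow> b \<in> {p..q} \<Longrightarrow> a < b \<Longrightarrow> g ((a+b)/2) = (g a + g b)/2"
  shows "\<forall>t\<in>{p..q}. g t \<le> 0"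
proof -
  obtain tm where tm: "tm \<in> {p..q}" "\<forall>y\<in>{p..q}. g y \<le> g tm"
    using continuous_attains_sup[OF compact_Icc _ cont] pq by auto
  define M where "M = g tm"
  define Z where "Z = {t \<in> {p..q}. g t = M}"
  have Zc: "closed Z" unfolding Z_def using continuous_closed_preimage_constant[OF cont] by auto
  have Zne: "Z \<noteq> {}" using tm unfolding Z_def M_def by auto
  have Zb: "bdd_below Z" unfolding Z_def by (auto intro: bdd_belowI[of _ p])
  define ts where "ts = Inf Z"
  have tsZ: "ts \<in> Z" using closed_contains_Inf[OF Zne Zb Zc] ts_def by simp
  have tsmin: "\<And>z. z \<in> Z \<Longrightarrow> ts \<le> z" unfolding ts_def using Zb by (simp add: cInf_lower)
  have "M \<le> 0"
  proof (cases "ts = p \<or> ts = q")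
    case True then show ?thesis using tsZ gp gq unfolding Z_def by auto
  next
    case False
    with tsZ have in1: "p < ts" "ts < q" unfolding Z_def by auto
    define d where "d = min (ts - p) (q - ts)"
    have d0: "d > 0" using in1 d_def by auto
    have a_in: "ts - d \<in> {p..q}" and b_in: "ts + d \<in> {p..q}" using in1 d_def by auto
    have "g ts = (g (ts - d) + g (ts + d))/2" using mid[OF a_in b_in] d0 by simp
    moreover have "g (ts - d) < M"
    proof -
      have "g (ts - d) \<le> M" using tm a_in M_def by auto
      moreover have "ts - d \<notin> Z" using tsmin d0 by force
      ultimately show ?thesis using a_in Z_def by auto
    qed
    moreover have "g (ts + d) \<le> M" using tm b_in M_def by auto
    moreover have "g ts = M" using tsZ Z_def by auto
    ultimately have "g (ts - d) + g (ts + d) = 2 * M" by simp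
    with \<open>g (ts - d) < M\<close> \<open>g (ts + d) \<le> M\<close> show ?thesis by linarith
  qed
  then show ?thesis using tm M_def by auto
qed

lemma jensen_Icc:
  fixes f :: "real \<Rightarrow> real"
  assumes pq: "p < q" and cont: "continuous_on {p..q} f"
    and mid: "\<And>a b. a \<in> {p..q} \<Longrightarrow> b \<in> {p..q} \<Longrightarrow> a < b \<Longrightarrow> f ((a+b)/2) = (f a + f b)/2"
  shows "\<forall>t\<in>{p..q}. f t = f p + (f q - f p) / (q - p) * (t - p)"
proof -
  define c where "c = (f q - f p) / (q - p)"
  define L where "L t = f p + c * (t - p)" for t
  define g where "g t = f t - L t" for t
  have Lmid: "L ((a+b)/2) = (L a + L b)/2" for a b unfolding L_def by (simp add: field_simps)
  have gmid: "g ((a+b)/2) = (g a + g b)/2" if "a \<in> {p..q}" "b \<in> {p..q}" "a < b" for a b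
    using mid[OF that] Lmid[of a b] unfolding g_def by simp
  have gc: "continuous_on {p..q} g" unfolding g_def L_def by (intro continuous_intros cont)
  have gp: "g p = 0" unfolding g_def L_def by simp
  have gq: "g q = 0" unfolding g_def L_def c_def using pq by simp
  have h1: "\<forall>t\<in>{p..q}. g t \<le> 0" using mid_le0[OF pq gc gp gq gmid] by blast
  have h2: "\<forall>t\<in>{p..q}. - g t \<le> 0"
  proof (rule mid_le0[OF pq])
    show "continuous_on {p..q} (\<lambda>t. - g t)" using gc by (rule continuous_on_minus)
    show "- g p = 0" using gp by simp
    show "- g q = 0" using gq by simp
    fix a b assume "a \<in> {p..q}" "b \<in> {p..q}" "a < b"
    from gmid[OF this] show "- g ((a + b) / 2) = (- g a + - g b) / 2" by simp
  qed
  show ?thesis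
  proof
    fix t assume "t \<in> {p..q}"
    with h1 h2 have "g t = 0" by force
    then show "f t = f p + (f q - f p) / (q - p) * (t - p)" unfolding g_def L_def c_def by simp
  qed
qed

lemma jensen_affine:
  fixes f :: "real \<Rightarrow> real"
  assumes S: "is_interval S" and cont: "continuous_on S f"
    and mid: "\<And>a b. a \<in> S \<Longrightarrow> b \<in> S \<Longrightarrow> a < b \<Longrightarrow> f ((a+b)/2) = (f a + f b)/2"
  shows "\<exists>A B. \<forall>t\<in>S. f t = A + B * t"
proof (cases "\<exists>p q. p \<in> S \<and> q \<in> S \<and> p < q")
  case False
  show ?thesis
  proof (cases "S = {}")
    case True then show ?thesis by auto
  next
    case False
    then obtain c where c: "c \<in> S" by auto
    have "\<forall>t\<in>S. t = c" using \<open>\<not> (\<exists>p q. p \<in> S \<and> q \<in> S \<and> p < q)\<close> c by (metis linorder_neqE_linordered_idom)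
    then show ?thesis by (rule_tac x="f c" in exI, rule_tac x=0 in exI) auto
  qed
next
  case True
  then obtain p q where pq: "p \<in> S" "q \<in> S" "p < q" by auto
  have "\<forall>t\<in>S. f t = f p + (f q - f p) / (q - p) * (t - p)"
  proof
    fix t assume tS: "t \<in> S"
    define p' where "p' = min p t"
    define q' where "q' = max q t"
    have pq': "p' < q'" using pq p'_def q'_def by auto
    have sub: "{p'..q'} \<subseteq> S"
    proof
      fix z assume "z \<in> {p'..q'}"
      then have "p' \<le> z" "z \<le> q'" by auto
      moreover have "p' \<in> S" "q' \<in> S" using pq tS p'_def q'_def by (auto simp: min_def max_def)
      ultimately show "z \<in> S" using S by (meson mem_is_interval_1_I)
    qed
    have J: "\<forall>z\<in>{p'..q'}. f z = f p' + (f q' - f p') / (q' - p') * (z - p')"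
      apply (rule jensen_Icc[OF pq'])
      using continuous_on_subset[OF cont sub] apply simp
      apply (rule mid) using sub by auto
    define s where "s = (f q' - f p') / (q' - p')"
    have pin: "p \<in> {p'..q'}" and qin: "q \<in> {p'..q'}" and tin: "t \<in> {p'..q'}"
      unfolding p'_def q'_def using pq by auto
    have ep: "f p = f p' + s * (p - p')" using J pin unfolding s_def by blast
    have eq: "f q = f p' + s * (q - p')" using J qin unfolding s_def by blast
    have et: "f t = f p' + s * (t - p')" using J tin unfolding s_def by blast
    have "f q - f p = s * (q - p)" using ep eq by (simp add: algebra_simps)
    then have "s = (f q - f p) / (q - p)" using pq by (simp add: field_simps)
    moreover have "f t = f p + s * (t - p)" using ep et by (simp add: algebra_simps)
    ultimately show "f t = f p + (f q - f p) / (q - p) * (t - p)" by simp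
  qed
  moreover obtain B where B: "B = (f q - f p) / (q - p)" by blast
  ultimately have "\<forall>t\<in>S. f t = f p + B * (t - p)" by simp
  then have "\<forall>t\<in>S. f t = (f p - B * p) + B * t" by (simp add: algebra_simps)
  then show ?thesis by blast
qed



lemma V1:
  fixes f :: "real \<Rightarrow> real"
  assumes cont: "continuous_on {a..b} f" and mono: "\<And>s t. a \<le> s \<Longrightarrow> s \<le> t \<Longrightarrow> t \<le> b \<Longrightarrow> f s \<le> f t"
    and ab: "a \<le> b" and lt: "f a < f b"
  shows "\<exists>c. a \<le> c \<and> c < b \<and> f c = f a \<and> (\<forall>t. c < t \<and> t \<le> b \<longrightarrow> f c < f t)"
proof -
  define Z where "Z = {t \<in> {a..b}. f t = f a}"
  have Zc: "closed Z" unfolding Z_def using continuous_closed_preimage_constant[OF cont] by auto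
  have Zne: "Z \<noteq> {}" using ab unfolding Z_def by auto
  have Zb: "bdd_above Z" unfolding Z_def by (auto intro: bdd_aboveI[of _ b])
  define c where "c = Sup Z"
  have cZ: "c \<in> Z" using closed_contains_Sup[OF Zne Zb Zc] c_def by simp
  have cmax: "\<And>z. z \<in> Z \<Longrightarrow> z \<le> c" unfolding c_def using Zb by (simp add: cSup_upper)
  have c1: "a \<le> c" "c \<le> b" "f c = f a" using cZ Z_def by auto
  have "c \<noteq> b" using c1 lt by auto
  moreover have "f c < f t" if "c < t" "t \<le> b" for t
  proof -
    have "t \<notin> Z" using cmax that by force
    then have "f t \<noteq> f a" using that c1 unfolding Z_def by auto
    moreover have "f c \<le> f t" using mono c1 that by auto
    ultimately show ?thesis using c1 by auto
  qed
  ultimately show ?thesis using c1 by auto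
qed

lemma V2:
  fixes f :: "real \<Rightarrow> real"
  assumes cont: "continuous_on {a..b} f" and mono: "\<And>s t. a \<le> s \<Longrightarrow> s \<le> t \<Longrightarrow> t \<le> b \<Longrightarrow> f s \<le> f t"
    and ab: "a \<le> b" and lt: "f a < f b"
  shows "\<exists>c. a < c \<and> c \<le> b \<and> f c = f b \<and> (\<forall>t. a \<le> t \<and> t < c \<longrightarrow> f t < f c)"
proof -
  define Z where "Z = {t \<in> {a..b}. f t = f b}"
  have Zc: "closed Z" unfolding Z_def using continuous_closed_preimage_constant[OF cont] by auto
  have Zne: "Z \<noteq> {}" using ab unfolding Z_def by auto
  have Zb: "bdd_below Z" unfolding Z_def by (auto intro: bdd_belowI[of _ a])
  define c where "c = Inf Z"
  have cZ: "c \<in> Z" using closed_contains_Inf[OF Zne Zb Zc] c_def by simp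
  have cmin: "\<And>z. z \<in> Z \<Longrightarrow> c \<le> z" unfolding c_def using Zb by (simp add: cInf_lower)
  have c1: "a \<le> c" "c \<le> b" "f c = f b" using cZ Z_def by auto
  have "c \<noteq> a" using c1 lt by auto
  then have "a < c" using c1 by auto
  moreover have "f t < f c" if "a \<le> t" "t < c" for t
  proof -
    have "t \<notin> Z" using cmin that by force
    then have "f t \<noteq> f b" using that c1 unfolding Z_def by auto
    moreover have "f t \<le> f c" using mono c1 that by auto
    ultimately show ?thesis using c1 by auto
  qed
  ultimately show ?thesis using c1 by (intro exI[of _ c]) auto
qed

locale dp =
  fixes I :: "real set" and x y \<phi> :: "real \<Rightarrow> real"
  assumes I_open: "open I" and I_int: "is_interval I"
  and xmono: "\<And>a b. a \<in> I \<Longrightarrow> b \<in> I \<Longrightarrow> a \<le> b \<Longrightarrow> x a \<le> x b"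
  and ymono: "\<And>a b. a \<in> I \<Longrightarrow> b \<in> I \<Longrightarrow> a \<le> b \<Longrightarrow> y b \<le> y a"
  and xcont: "continuous_on I x" and ycont: "continuous_on I y"
  and xpos: "\<And>t. t \<in> I \<Longrightarrow> x t > 0" and ypos: "\<And>t. t \<in> I \<Longrightarrow> y t > 0"
  and feq: "\<And>s t. s \<in> I \<Longrightarrow> t \<in> I \<Longrightarrow> s < t \<Longrightarrow> x s * y s + x t * y t - 2 * x s * y t = \<phi> (t - s)"
begin

lemma betw: "a \<in> I \<Longrightarrow> b \<in> I \<Longrightarrow> a \<le> c \<Longrightarrow> c \<le> b \<Longrightarrow> c \<in> I"
  using I_int by (meson mem_is_interval_1_I)

lemma betw_sub: "a \<in> I \<Longrightarrow> b \<in> I \<Longrightarrow> {a..b} \<subseteq> I"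
proof
  fix z assume "a \<in> I" "b \<in> I" "z \<in> {a..b}"
  then show "z \<in> I" using betw[of a b z] by simp
qed

lemma openI: "t \<in> I \<Longrightarrow> \<exists>e>0. \<forall>z. \<bar>z - t\<bar> < e \<longrightarrow> z \<in> I"
  using I_open open_real by blast

lemma Fshift:
  assumes "s \<in> I" "t \<in> I" "s < t" "s' \<in> I" "t' \<in> I" "s' < t'" "t - s = t' - s'"
  shows "x s * y s + x t * y t - 2 * x s * y t = x s' * y s' + x t' * y t' - 2 * x s' * y t'"
  using feq[of s t] feq[of s' t'] assms by simp

lemma K:
  assumes "s \<in> I" "t \<in> I" "r \<in> I" "s < t" "t < r"
  shows "2 * ((x t - x s) * (y t - y r)) = \<phi> (t - s) + \<phi> (r - t) - \<phi> (r - s)"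
proof -
  have "s < r" using assms by simp
  have 1: "x s * y s + x t * y t - 2 * x s * y t = \<phi> (t - s)" using feq assms by simp
  have 2: "x t * y t + x r * y r - 2 * x t * y r = \<phi> (r - t)" using feq assms by simp
  have 3: "x s * y s + x r * y r - 2 * x s * y r = \<phi> (r - s)" using feq assms \<open>s < r\<close> by simp
  show ?thesis using 1 2 3 by (simp add: algebra_simps)
qed

lemma Kgap:
  assumes "s \<in> I" "t \<in> I" "r \<in> I" "s < t" "t < r"
    and "s' \<in> I" "t' \<in> I" "r' \<in> I" "s' < t'" "t' < r'"
    and "t - s = t' - s'" "r - t = r' - t'"
  shows "(x t - x s) * (y t - y r) = (x t' - x s') * (y t' - y r')"
proof -
  have e1: "\<phi> (r - s) = \<phi> (r' - s')" by (rule arg_cong[where f=\<phi>]) (use assms in linarith)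
  have e2: "\<phi> (t - s) = \<phi> (t' - s')" using assms by simp
  have e3: "\<phi> (r - t) = \<phi> (r' - t')" using assms by simp
  show ?thesis using K[of s t r] K[of s' t' r'] assms e1 e2 e3 by linarith
qed

lemma strict_point:
  assumes I0: "s0 \<in> I" "t0 \<in> I" "r0 \<in> I" and o: "s0 < t0" "t0 < r0"
    and sx: "x s0 < x t0" and sy: "y r0 < y t0"
  shows "\<exists>c\<in>I. (\<forall>t\<in>I. t < c \<longrightarrow> x t < x c) \<and> (\<forall>t\<in>I. c < t \<longrightarrow> y t < y c)"
proof -
  have sub1: "{s0..t0} \<subseteq> I" using betw_sub I0 by blast
  have "\<exists>c. s0 < c \<and> c \<le> t0 \<and> x c = x t0 \<and> (\<forall>t. s0 \<le> t \<and> t < c \<longrightarrow> x t < x c)"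
  proof (rule V2)
    show "continuous_on {s0..t0} x" using continuous_on_subset[OF xcont sub1] .
    show "\<And>s t. s0 \<le> s \<Longrightarrow> s \<le> t \<Longrightarrow> t \<le> t0 \<Longrightarrow> x s \<le> x t"
    proof -
      fix s t assume "s0 \<le> s" "s \<le> t" "t \<le> t0"
      then have "s \<in> I" "t \<in> I" using sub1 by auto
      then show "x s \<le> x t" using xmono \<open>s \<le> t\<close> by blast
    qed
  qed (use o sx in auto)
  then obtain t1 where t1: "s0 < t1" "t1 \<le> t0" "x t1 = x t0" "\<forall>t. s0 \<le> t \<and> t < t1 \<longrightarrow> x t < x t1"
    by blast
  have t1I: "t1 \<in> I" using betw[of s0 t0 t1] I0 t1 by auto
  have xl: "\<forall>t\<in>I. t < t1 \<longrightarrow> x t < x t1"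
  proof (intro ballI impI)
    fix t assume "t \<in> I" "t < t1"
    show "x t < x t1"
    proof (cases "s0 \<le> t")
      case True then show ?thesis using t1 \<open>t < t1\<close> by auto
    next
      case False
      then have "x t \<le> x s0" using xmono \<open>t \<in> I\<close> I0 by auto
      also have "x s0 < x t1" using t1 by auto
      finally show ?thesis .
    qed
  qed
  have yt1: "y r0 < y t1" using ymono[of t1 t0] t1I I0 t1 sy by auto
  have sub2: "{t1..r0} \<subseteq> I" using betw_sub t1I I0 by blast
  have "\<exists>c. t1 \<le> c \<and> c < r0 \<and> - y c = - y t1 \<and> (\<forall>t. c < t \<and> t \<le> r0 \<longrightarrow> - y c < - y t)"
  proof (rule V1)
    show "continuous_on {t1..r0} (\<lambda>t. - y t)" using continuous_on_minus[OF continuous_on_subset[OF ycont sub2]] .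
    show "\<And>s t. t1 \<le> s \<Longrightarrow> s \<le> t \<Longrightarrow> t \<le> r0 \<Longrightarrow> - y s \<le> - y t"
    proof -
      fix s t assume "t1 \<le> s" "s \<le> t" "t \<le> r0"
      then have "s \<in> I" "t \<in> I" using sub2 by auto
      then show "- y s \<le> - y t" using ymono \<open>s \<le> t\<close> by force
    qed
  qed (use t1 o yt1 in auto)
  then obtain t2 where t2: "t1 \<le> t2" "t2 < r0" "- y t2 = - y t1" "\<forall>t. t2 < t \<and> t \<le> r0 \<longrightarrow> - y t2 < - y t"
    by blast
  have t2I: "t2 \<in> I" using betw[of t1 r0 t2] I0 t1I t2 by auto
  have yr: "\<forall>t\<in>I. t2 < t \<longrightarrow> y t < y t2"
  proof (intro ballI impI)
    fix t assume "t \<in> I" "t2 < t"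
    show "y t < y t2"
    proof (cases "t \<le> r0")
      case True then show ?thesis using t2 \<open>t2 < t\<close> by auto
    next
      case False
      then have "y t \<le> y r0" using ymono \<open>t \<in> I\<close> I0 by auto
      also have "y r0 < y t2" using t2 yt1 by auto
      finally show ?thesis .
    qed
  qed
  have "t2 = t1"
  proof (rule ccontr)
    assume "t2 \<noteq> t1"
    then have lt: "t1 < t2" using t2 by auto
    define d where "d = min ((t2 - t1)/2) ((r0 - t2)/4)"
    have d0: "d > 0" using lt t2 d_def by auto
    have "d \<le> (t2 - t1)/2" "d \<le> (r0 - t2)/4" unfolding d_def by (rule min.cobounded1, rule min.cobounded2)
    then have d1: "2 * d \<le> t2 - t1" "4 * d \<le> r0 - t2" by (simp_all add: field_simps)
    define u where "u = min d (t1 - s0)"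
    have u0: "u > 0" "u \<le> d" "u \<le> t1 - s0" using u_def d0 t1 by auto
    have inI: "\<And>z. t1 \<le> z \<Longrightarrow> z \<le> r0 \<Longrightarrow> z \<in> I" using betw[OF t1I I0(3)] by blast
    have A1: "t1 - u \<in> I" using betw[of s0 t1 "t1 - u"] I0 t1I u0 by auto
    have pts: "t1 + d \<in> I" "t1 + 2*d \<in> I" "t2 + d \<in> I" "t2 + 3*d \<in> I" "t1 + 2*d - u \<in> I"
      using inI d0 d1 u0 lt by auto
    have k1: "(x t1 - x (t1 - u)) * (y t1 - y (t2 + d)) =
              (x (t1 + 2*d) - x (t1 + 2*d - u)) * (y (t1 + 2*d) - y (t2 + 3*d))"
      by (rule Kgap) (use A1 t1I pts u0 d0 d1 lt in auto)
    have "x (t1 - u) < x t1" using xl A1 u0 by auto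
    moreover have "y (t2 + d) < y t1" using yr pts d0 t2 by auto
    ultimately have "(x t1 - x (t1 - u)) * (y t1 - y (t2 + d)) > 0" by simp
    with k1 have "x (t1 + 2*d) - x (t1 + 2*d - u) \<noteq> 0" by auto
    moreover have "x (t1 + 2*d - u) \<le> x (t1 + 2*d)" using xmono pts u0 by auto
    ultimately have "x (t1 + 2*d - u) < x (t1 + 2*d)" by auto
    moreover have "x (t1 + d) \<le> x (t1 + 2*d - u)" using xmono pts u0 by auto
    ultimately have X2: "x (t1 + d) < x (t1 + 2*d)" by auto
    have k2: "(x (t1 + d) - x t1) * (y (t1 + d) - y t2) =
              (x (t1 + 2*d) - x (t1 + d)) * (y (t1 + 2*d) - y (t2 + d))"
      by (rule Kgap) (use t1I t2I pts d0 d1 lt in auto)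
    have "y (t1 + d) \<le> y t1" using ymono t1I pts d0 by auto
    moreover have "y t2 \<le> y (t1 + d)" using ymono t2I pts d0 d1 by auto
    ultimately have "y (t1 + d) = y t2" using t2 by auto
    then have "(x (t1 + 2*d) - x (t1 + d)) * (y (t1 + 2*d) - y (t2 + d)) = 0" using k2 by simp
    moreover have "y t2 \<le> y (t1 + 2*d)" using ymono t2I pts d1 by auto
    moreover have "y (t2 + d) < y t2" using yr pts d0 by auto
    ultimately show False using X2 by auto
  qed
  then show ?thesis using t1I xl yr by auto
qed

lemma strict_mono:
  assumes cI: "c \<in> I" and lx: "\<forall>t\<in>I. t < c \<longrightarrow> x t < x c" and ry: "\<forall>t\<in>I. c < t \<longrightarrow> y t < y c"
    and ab: "a \<in> I" "b \<in> I" "a < b"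
  shows "x a < x b \<and> y b < y a"
proof
  obtain ec where ec: "ec > 0" "\<forall>z. \<bar>z - c\<bar> < ec \<longrightarrow> z \<in> I" using openI cI by blast
  obtain ea where ea: "ea > 0" "\<forall>z. \<bar>z - a\<bar> < ea \<longrightarrow> z \<in> I" using openI ab by blast
  obtain eb where eb: "eb > 0" "\<forall>z. \<bar>z - b\<bar> < eb \<longrightarrow> z \<in> I" using openI ab by blast
  show "x a < x b"
  proof -
    define u where "u = min (b - a) (ec/2)"
    define v where "v = min (ec/2) (eb/2)"
    have uv: "u > 0" "v > 0" "u \<le> b - a" "u < ec" "v < ec" "v < eb" using u_def v_def ec eb ab by auto
    have p: "c - u \<in> I" "c + v \<in> I" "b + v \<in> I" using ec eb uv by auto
    have p2: "b - u \<in> I" using betw[of a b "b - u"] ab uv by auto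
    have k: "(x c - x (c - u)) * (y c - y (c + v)) = (x b - x (b - u)) * (y b - y (b + v))"
      by (rule Kgap) (use p p2 cI ab uv in auto)
    have "(x c - x (c - u)) * (y c - y (c + v)) > 0" using lx ry p uv by simp
    with k have "x b - x (b - u) \<noteq> 0" by auto
    moreover have "x (b - u) \<le> x b" using xmono p2 ab uv by auto
    moreover have "x a \<le> x (b - u)" using xmono p2 ab uv by auto
    ultimately show ?thesis by auto
  qed
  show "y b < y a"
  proof -
    define u where "u = min (ea/2) (ec/2)"
    define v where "v = min (b - a) (ec/2)"
    have uv: "u > 0" "v > 0" "v \<le> b - a" "u < ec" "v < ec" "u < ea" using u_def v_def ec ea ab by auto
    have p: "c - u \<in> I" "c + v \<in> I" "a - u \<in> I" using ec ea uv by auto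
    have p2: "a + v \<in> I" using betw[of a b "a + v"] ab uv by auto
    have k: "(x c - x (c - u)) * (y c - y (c + v)) = (x a - x (a - u)) * (y a - y (a + v))"
      by (rule Kgap) (use p p2 cI ab uv in auto)
    have "(x c - x (c - u)) * (y c - y (c + v)) > 0" using lx ry p uv by simp
    with k have "y a - y (a + v) \<noteq> 0" by auto
    moreover have "y (a + v) \<le> y a" using ymono p2 ab uv by auto
    moreover have "y b \<le> y (a + v)" using ymono p2 ab uv by auto
    ultimately show ?thesis by auto
  qed
qed

end


locale dps = dp +
  assumes xs: "\<And>a b. a \<in> I \<Longrightarrow> b \<in> I \<Longrightarrow> a < b \<Longrightarrow> x a < x b"
  and ys: "\<And>a b. a \<in> I \<Longrightarrow> b \<in> I \<Longrightarrow> a < b \<Longrightarrow> y b < y a"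

locale dpw = dps +
  fixes w t0 :: real
  assumes w0: "w > 0" and t0I: "t0 \<in> I" and t02: "t0 + 2 * w \<in> I"
begin

definition "J t \<longleftrightarrow> t \<in> I \<and> t + w \<in> I"

lemma t1I: "t0 + w \<in> I" using betw[OF t0I t02, of "t0 + w"] w0 by simp

lemma Jt0: "J t0" using t0I t1I J_def by simp
lemma Jt1: "J (t0 + w)" using t1I t02 J_def by (simp add: algebra_simps)

lemma J_right: assumes "J t" shows "\<exists>r. t < r \<and> J r"
proof -
  have tI: "t \<in> I" and twI: "t + w \<in> I" using assms J_def by auto
  obtain e where e: "e > 0" "\<forall>z. \<bar>z - (t + w)\<bar> < e \<longrightarrow> z \<in> I" using openI[OF twI] by blast
  define r where "r = t + min (e/2) w"
  have "min (e/2) w > 0" using e w0 by simp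
  moreover have "min (e/2) w \<le> w" "min (e/2) w < e" using e by auto
  ultimately have "t < r" "r \<le> t + w" "\<bar>(r + w) - (t + w)\<bar> < e" unfolding r_def by auto
  then have "r \<in> I" "r + w \<in> I" using betw[OF tI twI, of r] e by auto
  then show ?thesis using \<open>t < r\<close> J_def by blast
qed

lemma J_left: assumes "J t" shows "\<exists>s. s < t \<and> J s"
proof -
  have tI: "t \<in> I" and twI: "t + w \<in> I" using assms J_def by auto
  obtain e where e: "e > 0" "\<forall>z. \<bar>z - t\<bar> < e \<longrightarrow> z \<in> I" using openI[OF tI] by blast
  define s where "s = t - min (e/2) w"
  have "min (e/2) w > 0" using e w0 by simp
  moreover have "min (e/2) w \<le> w" "min (e/2) w < e" using e by auto
  ultimately have "s < t" "t \<le> s + w" "s + w \<le> t + w" "\<bar>s - t\<bar> < e" unfolding s_def by auto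
  then have "s \<in> I" "s + w \<in> I" using betw[OF tI twI, of "s + w"] e by auto
  then show ?thesis using \<open>s < t\<close> J_def by blast
qed

lemma R_same_end:
  assumes "J s" "J s'" "J t" "s < t" "s' < t"
  shows "(x (t+w) - x (s+w)) * (x t - x s') = (x (t+w) - x (s'+w)) * (x t - x s)"
proof -
  obtain r where r: "t < r" "J r" using J_right assms by blast
  have I: "s \<in> I" "s' \<in> I" "t \<in> I" "r \<in> I" "s + w \<in> I" "s' + w \<in> I" "t + w \<in> I" "r + w \<in> I"
    using assms r J_def by auto
  have k1: "(x t - x s) * (y t - y r) = (x (t+w) - x (s+w)) * (y (t+w) - y (r+w))"
    by (rule Kgap) (use I assms r in auto)
  have k2: "(x t - x s') * (y t - y r) = (x (t+w) - x (s'+w)) * (y (t+w) - y (r+w))"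
    by (rule Kgap) (use I assms r in auto)
  have Y: "y (t+w) - y (r+w) > 0" using ys I r by auto
  have "((x (t+w) - x (s+w)) * (x t - x s') - (x (t+w) - x (s'+w)) * (x t - x s)) * (y (t+w) - y (r+w)) = 0"
    using k1 k2 by algebra
  then show ?thesis using Y by simp
qed

lemma R_chain:
  assumes "J s" "J t" "J t'" "s < t" "t < t'"
  shows "(x (t+w) - x (s+w)) * (x t' - x t) = (x (t'+w) - x (t+w)) * (x t - x s)"
proof -
  have h: "(x (t'+w) - x (s+w)) * (x t' - x t) = (x (t'+w) - x (t+w)) * (x t' - x s)"
    by (rule R_same_end) (use assms in auto)
  show ?thesis using h by algebra
qed

lemma R_gen_le:
  assumes "J s" "J t" "J s'" "J t'" "s < t" "s' < t'" "t \<le> t'"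
  shows "(x (t+w) - x (s+w)) * (x t' - x s') = (x (t'+w) - x (s'+w)) * (x t - x s)"
proof (cases "t = t'")
  case True
  then show ?thesis using R_same_end[of s s' t] assms by (simp add: algebra_simps)
next
  case False
  then have tt: "t < t'" using assms by simp
  have h1: "(x (t+w) - x (s+w)) * (x t' - x t) = (x (t'+w) - x (t+w)) * (x t - x s)"
    using R_chain[of s t t'] assms tt by blast
  have h2: "(x (t'+w) - x (t+w)) * (x t' - x s') = (x (t'+w) - x (s'+w)) * (x t' - x t)"
    using R_same_end[of t s' t'] assms tt by blast
  have V: "x t' - x t > 0" using xs assms tt J_def by auto
  have "((x (t+w) - x (s+w)) * (x t' - x s') - (x (t'+w) - x (s'+w)) * (x t - x s)) * (x t' - x t) = 0"
    using h1 h2 by algebra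
  then show ?thesis using V by simp
qed

lemma R_gen:
  assumes "J s" "J t" "J s'" "J t'" "s < t" "s' < t'"
  shows "(x (t+w) - x (s+w)) * (x t' - x s') = (x (t'+w) - x (s'+w)) * (x t - x s)"
proof (cases "t \<le> t'")
  case True then show ?thesis using R_gen_le assms by blast
next
  case False
  then have "(x (t'+w) - x (s'+w)) * (x t - x s) = (x (t+w) - x (s+w)) * (x t' - x s')"
    using R_gen_le[of s' t' s t] assms by auto
  then show ?thesis by simp
qed

definition "m = (x (t0 + w + w) - x (t0 + w)) / (x (t0 + w) - x t0)"
definition "k = x (t0 + w) - m * x t0"
definition "k' = y (t0 + w) - y t0 / m"

lemma m_pos: "m > 0"
proof -
  have "t0 + w + w \<in> I" using t02 by (simp add: algebra_simps)
  then have "x (t0 + w + w) - x (t0 + w) > 0" "x (t0 + w) - x t0 > 0" using xs t0I t1I w0 by auto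
  then show ?thesis unfolding m_def by simp
qed

lemma Xshift: assumes "J s" "J t" "s < t" shows "x (t+w) - x (s+w) = m * (x t - x s)"
proof -
  have "(x (t+w) - x (s+w)) * (x (t0 + w) - x t0) = (x (t0 + w + w) - x (t0 + w)) * (x t - x s)"
    using R_gen[of s t t0 "t0 + w"] assms Jt0 Jt1 w0 by auto
  moreover have "x (t0 + w) - x t0 > 0" using xs t0I t1I w0 by auto
  ultimately show ?thesis unfolding m_def by (simp add: field_simps)
qed

lemma xrec: assumes "J t" shows "x (t + w) = m * x t + k"
proof -
  consider "t < t0" | "t = t0" | "t0 < t" by linarith
  then show ?thesis
  proof cases
    case 1 then show ?thesis using Xshift[of t t0] assms Jt0 unfolding k_def by (simp add: algebra_simps)
  next
    case 2 then show ?thesis unfolding k_def by simp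
  next
    case 3 then show ?thesis using Xshift[of t0 t] assms Jt0 unfolding k_def by (simp add: algebra_simps)
  qed
qed

lemma Yshift: assumes "J t" "J r" "t < r" shows "m * (y (t+w) - y (r+w)) = y t - y r"
proof -
  obtain s where s: "s < t" "J s" using J_left assms by blast
  have I: "s \<in> I" "t \<in> I" "r \<in> I" "s + w \<in> I" "t + w \<in> I" "r + w \<in> I"
    using assms s J_def by auto
  have k1: "(x t - x s) * (y t - y r) = (x (t+w) - x (s+w)) * (y (t+w) - y (r+w))"
    by (rule Kgap) (use I assms s in auto)
  have "x (t+w) - x (s+w) = m * (x t - x s)" using Xshift s assms by blast
  with k1 have "(x t - x s) * (y t - y r) = (x t - x s) * (m * (y (t+w) - y (r+w)))" by simp
  moreover have "x t - x s > 0" using xs I s by auto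
  ultimately show ?thesis by simp
qed

lemma yrec: assumes "J t" shows "m * y (t + w) = y t + m * k'"
proof -
  have m0: "m \<noteq> 0" using m_pos by simp
  consider "t < t0" | "t = t0" | "t0 < t" by linarith
  then show ?thesis
  proof cases
    case 1 then show ?thesis using Yshift[of t t0] assms Jt0 m0 unfolding k'_def by (simp add: algebra_simps)
  next
    case 2 then show ?thesis using m0 unfolding k'_def by (simp add: algebra_simps)
  next
    case 3 then show ?thesis using Yshift[of t0 t] assms Jt0 m0 unfolding k'_def by (simp add: algebra_simps)
  qed
qed

lemma dich: assumes "J s" "J t" "s < t" shows "m * m * k' * (x t - x s) + k * (y s - y t) = 0"
proof -
  have I: "s \<in> I" "t \<in> I" "s + w \<in> I" "t + w \<in> I" using assms J_def by auto
  have F: "x (s+w) * y (s+w) + x (t+w) * y (t+w) - 2 * x (s+w) * y (t+w) = x s * y s + x t * y t - 2 * x s * y t"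
    by (rule Fshift) (use I assms in auto)
  have h1: "x (s+w) = m * x s + k" "x (t+w) = m * x t + k" using xrec assms by auto
  have h2: "m * y (s+w) = y s + m * k'" "m * y (t+w) = y t + m * k'" using yrec assms by auto
  show ?thesis using F h1 h2 by algebra
qed

lemma shift_dich:
  "(\<exists>m>0. \<forall>t. t \<in> I \<and> t + w \<in> I \<longrightarrow> x (t+w) = m * x t \<and> y (t+w) = y t / m)
   \<or> (\<exists>C \<gamma>. \<gamma> > 0 \<and> (\<forall>t\<in>I. y t = C - \<gamma> * x t))"
proof (cases "k = 0")
  case True
  have X: "x (t0 + w) - x t0 > 0" using xs t0I t1I w0 by auto
  have "m * m * k' * (x (t0 + w) - x t0) = 0" using dich[OF Jt0 Jt1] True w0 by simp
  then have "k' = 0" using X m_pos by simp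
  then have "\<forall>t. t \<in> I \<and> t + w \<in> I \<longrightarrow> x (t+w) = m * x t \<and> y (t+w) = y t / m"
    using xrec yrec True m_pos unfolding J_def by (auto simp: field_simps)
  then show ?thesis using m_pos by blast
next
  case False
  define \<gamma> where "\<gamma> = - (m * m * k') / k"
  have gY: "y s - y t = \<gamma> * (x t - x s)" if "J s" "J t" "s < t" for s t
    using dich[OF that] False unfolding \<gamma>_def by (simp add: field_simps)
  have "\<gamma> * (x (t0 + w) - x t0) = y t0 - y (t0 + w)" using gY[OF Jt0 Jt1] w0 by simp
  moreover have "x (t0 + w) - x t0 > 0" using xs t0I t1I w0 by auto
  moreover have "y t0 - y (t0 + w) > 0" using ys t0I t1I w0 by auto
  ultimately have g0: "\<gamma> > 0" by (metis zero_less_mult_pos2)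
  define h where "h t = y t + \<gamma> * x t" for t
  have hJ: "h s = h t" if "J s" "J t" for s t
  proof -
    consider "s < t" | "s = t" | "t < s" by linarith
    then show ?thesis
    proof cases
      case 1 then show ?thesis using gY[OF that 1] unfolding h_def by (simp add: algebra_simps)
    next
      case 2 then show ?thesis by simp
    next
      case 3 then show ?thesis using gY[OF that(2,1) 3] unfolding h_def by (simp add: algebra_simps)
    qed
  qed
  obtain e where e: "e > 0" "\<forall>z. \<bar>z - (t0 + 2 * w)\<bar> < e \<longrightarrow> z \<in> I" using openI[OF t02] by blast
  define \<epsilon> where "\<epsilon> = min (e/2) w"
  have eps: "\<epsilon> > 0" "\<epsilon> \<le> w" "\<epsilon> < e" unfolding \<epsilon>_def using e w0 by auto
  have Ja: "J (t0 + \<epsilon>)"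
  proof -
    have "t0 + \<epsilon> \<in> I" using betw[OF t0I t02, of "t0 + \<epsilon>"] eps w0 by simp
    moreover have "t0 + \<epsilon> + w \<in> I" using betw[OF t0I t02, of "t0 + \<epsilon> + w"] eps w0 by simp
    ultimately show ?thesis unfolding J_def by simp
  qed
  have Jaw: "J (t0 + \<epsilon> + w)"
  proof -
    have "t0 + \<epsilon> + w \<in> I" using Ja J_def by simp
    moreover have "t0 + \<epsilon> + w + w \<in> I" using e eps by (simp add: algebra_simps)
    ultimately show ?thesis unfolding J_def by simp
  qed
  have m1: "m = 1"
  proof -
    let ?a = "t0 + \<epsilon>" and ?b = t0
    have e1: "h (?a + w) = h (?b + w)" using hJ[OF Jaw Jt1] .
    have e2: "h ?a = h ?b" using hJ[OF Ja Jt0] .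
    have x1: "x (?a + w) = m * x ?a + k" "x (?b + w) = m * x ?b + k" using xrec Ja Jt0 by auto
    have y1: "m * y (?a + w) = y ?a + m * k'" "m * y (?b + w) = y ?b + m * k'" using yrec Ja Jt0 by auto
    have "(m * m - 1) * \<gamma> * (x ?a - x ?b) = 0"
      using e1 e2 x1 y1 unfolding h_def by algebra
    moreover have "x ?a - x ?b \<noteq> 0" using xs Ja Jt0 eps unfolding J_def by force
    ultimately have "m * m = 1" using g0 by simp
    then show ?thesis using m_pos by (metis mult_cancel_right1 nonzero_mult_div_cancel_right one_neq_zero
        power2_eq_square real_sqrt_one real_sqrt_pow2 less_irrefl abs_of_pos real_sqrt_abs)
  qed
  have hw: "h (u + w) = h u + k' + \<gamma> * k" if "J u" for u
    using xrec[OF that] yrec[OF that] m1 unfolding h_def by (simp add: algebra_simps)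
  have "\<forall>t\<in>I. h t = h t0"
  proof
    fix t assume tI: "t \<in> I"
    show "h t = h t0"
    proof (cases "J t")
      case True then show ?thesis using hJ Jt0 by blast
    next
      case False
      then have nI: "t + w \<notin> I" using tI J_def by simp
      have "t + w > t0 + 2 * w"
      proof (rule ccontr)
        assume "\<not> t + w > t0 + 2 * w"
        then have "t + w \<in> I" using betw[OF tI t02, of "t + w"] w0 by simp
        with nI show False by simp
      qed
      then have "t0 < t - w" by simp
      then have "t - w \<in> I" using betw[OF t0I tI, of "t - w"] w0 by simp
      then have Jtw: "J (t - w)" using tI J_def by simp
      have "h t = h (t - w) + k' + \<gamma> * k" using hw[OF Jtw] by simp
      also have "\<dots> = h t0 + k' + \<gamma> * k" using hJ[OF Jtw Jt0] by simp
      also have "\<dots> = h (t0 + w)" using hw[OF Jt0] by simp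
      also have "\<dots> = h t0" using hJ[OF Jt1 Jt0] .
      finally show ?thesis .
    qed
  qed
  then have "\<forall>t\<in>I. y t = h t0 - \<gamma> * x t" unfolding h_def by (simp add: algebra_simps)
  then show ?thesis using g0 by blast
qed

end

context dps begin

lemma two_pts: assumes "I \<noteq> {}" shows "\<exists>a b. a \<in> I \<and> b \<in> I \<and> a < b"
proof -
  obtain a where a: "a \<in> I" using assms by blast
  obtain e where e: "e > 0" "\<forall>z. \<bar>z - a\<bar> < e \<longrightarrow> z \<in> I" using openI[OF a] by blast
  have "a + e/2 \<in> I" using e by simp
  then show ?thesis using a e by (intro exI[of _ a] exI[of _ "a + e/2"]) auto
qed

lemma caseA:
  assumes ne: "I \<noteq> {}" and g0: "\<gamma> > 0" and yC: "\<forall>t\<in>I. y t = C - \<gamma> * x t"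
  shows "\<exists>a b c d. b > 0 \<and> d > 0 \<and> (\<forall>t\<in>I. x t = a + b * t \<and> y t = c - d * t)"
proof -
  have mid: "x ((a + b) / 2) = (x a + x b) / 2" if ab: "a \<in> I" "b \<in> I" "a < b" for a b
  proof -
    define mm where "mm = (a + b) / 2"
    have mI: "mm \<in> I" unfolding mm_def using betw[OF ab(1,2), of "(a + b) / 2"] ab by simp
    have am: "a < mm" "mm < b" unfolding mm_def using ab by auto
    have gap: "mm - a = b - mm" unfolding mm_def by (simp add: field_simps)
    have F: "x a * y a + x mm * y mm - 2 * x a * y mm = x mm * y mm + x b * y b - 2 * x mm * y b"
      by (rule Fshift) (use ab mI am gap in auto)
    have ya: "y a = C - \<gamma> * x a" and ym: "y mm = C - \<gamma> * x mm" and yb: "y b = C - \<gamma> * x b"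
      using yC ab mI by auto
    have fac: "((x mm - x a) - (x b - x mm)) * (C - \<gamma> * ((x mm - x a) + (x b - x mm))) = 0"
      using F ya ym yb by algebra
    have "C - \<gamma> * ((x mm - x a) + (x b - x mm)) = y b + \<gamma> * x a" using yb by (simp add: algebra_simps)
    moreover have "y b + \<gamma> * x a > 0" using ypos xpos ab g0 by (simp add: add_pos_pos)
    ultimately have "(x mm - x a) - (x b - x mm) = 0" using fac by simp
    then show ?thesis unfolding mm_def by simp
  qed
  obtain A B where AB: "\<forall>t\<in>I. x t = A + B * t"
    using jensen_affine[OF I_int xcont mid] by blast
  obtain p q where pq: "p \<in> I" "q \<in> I" "p < q" using two_pts[OF ne] by blast
  have "x p < x q" using xs pq by simp
  then have "B * p < B * q" using AB pq by simp
  then have "B * (q - p) > 0" by (simp add: right_diff_distrib)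
  then have B0: "B > 0" using pq by (simp add: zero_less_mult_iff)
  have "\<forall>t\<in>I. x t = A + B * t \<and> y t = (C - \<gamma> * A) - (\<gamma> * B) * t"
    using AB yC by (simp add: algebra_simps)
  moreover have "\<gamma> * B > 0" using g0 B0 by simp
  ultimately show ?thesis using B0 by (intro exI[of _ A] exI[of _ B] exI[of _ "C - \<gamma> * A"] exI[of _ "\<gamma> * B"]) simp
qed

lemma caseB:
  assumes ne: "I \<noteq> {}"
    and H: "\<And>w t0. w > 0 \<Longrightarrow> t0 \<in> I \<Longrightarrow> t0 + 2 * w \<in> I \<Longrightarrow>
            \<exists>m>0. \<forall>t. t \<in> I \<and> t + w \<in> I \<longrightarrow> x (t+w) = m * x t \<and> y (t+w) = y t / m"
  shows "\<exists>a b c. a > 0 \<and> b > 0 \<and> c > 0 \<and> (\<forall>t\<in>I. x t = a * exp (c * t) \<and> y t = b * exp (- c * t))"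
proof -
  have step: "x (a + (b - a)/2) * y (a + (b - a)/2) = x a * y a \<and> x b * y b = x (a + (b - a)/2) * y (a + (b - a)/2)
      \<and> ln (x (a + (b - a)/2)) = (ln (x a) + ln (x b)) / 2"
    if ab: "a \<in> I" "b \<in> I" "a < b" for a b
  proof -
    define w where "w = (b - a)/2"
    have w0: "w > 0" using ab w_def by simp
    have b2: "a + 2 * w = b" using w_def by simp
    have "a + 2 * w \<in> I" using b2 ab by simp
    then obtain m where m: "m > 0" "\<forall>t. t \<in> I \<and> t + w \<in> I \<longrightarrow> x (t+w) = m * x t \<and> y (t+w) = y t / m"
      using H[OF w0 ab(1)] by blast
    have awI: "a + w \<in> I" using betw[OF ab(1,2), of "a + w"] w0 b2 by simp
    have bb: "a + w + w = b" using w_def by simp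
    have r1: "x (a + w) = m * x a" "y (a + w) = y a / m" using m awI ab by auto
    have r2: "x b = m * x (a + w)" "y b = y (a + w) / m" using m(2)[rule_format, of "a + w"] awI ab bb by auto
    have xa: "x a > 0" and xw: "x (a + w) > 0" using xpos ab awI by auto
    have "ln (x (a + w)) = ln m + ln (x a)" using r1 m xa by (simp add: ln_mult)
    moreover have "ln (x b) = ln m + ln (x (a + w))" using r2 m xw by (simp add: ln_mult)
    ultimately have "ln (x (a + w)) = (ln (x a) + ln (x b)) / 2" by simp
    moreover have "x (a + w) * y (a + w) = x a * y a" using r1 m by simp
    moreover have "x b * y b = x (a + w) * y (a + w)" using r2 m by simp
    ultimately show ?thesis unfolding w_def by simp
  qed
  have mid: "ln (x ((a + b) / 2)) = (ln (x a) + ln (x b)) / 2" if "a \<in> I" "b \<in> I" "a < b" for a b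
  proof -
    have e: "a + (b - a)/2 = (a + b)/2" by (simp add: field_simps)
    have "ln (x (a + (b - a)/2)) = (ln (x a) + ln (x b)) / 2" using step[OF that] by blast
    then show ?thesis unfolding e .
  qed
  have lc: "continuous_on I (\<lambda>t. ln (x t))"
  proof (rule continuous_on_ln[OF xcont])
    show "\<forall>t\<in>I. x t \<noteq> 0" using xpos by (metis less_irrefl)
  qed
  obtain A B where AB: "\<forall>t\<in>I. ln (x t) = A + B * t"
    using jensen_affine[OF I_int lc mid] by blast
  obtain p q where pq: "p \<in> I" "q \<in> I" "p < q" using two_pts[OF ne] by blast
  have "x p < x q" using xs pq by blast
  then have "ln (x p) < ln (x q)" using xpos pq by simp
  then have "B * p < B * q" using AB pq by simp
  then have "B * (q - p) > 0" by (simp add: right_diff_distrib)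
  then have B0: "B > 0" using pq by (simp add: zero_less_mult_iff)
  have xe: "x t = exp A * exp (B * t)" if "t \<in> I" for t
  proof -
    have "x t = exp (ln (x t))" using xpos that by simp
    also have "\<dots> = exp (A + B * t)" using AB that by simp
    finally show ?thesis by (simp add: exp_add)
  qed
  have pc: "x t * y t = x p * y p" if "t \<in> I" for t
  proof -
    consider "t < p" | "t = p" | "p < t" by linarith
    then show ?thesis
    proof cases
      case 1 then show ?thesis using step[OF that pq(1) 1] by simp
    next
      case 2 then show ?thesis by simp
    next
      case 3 then show ?thesis using step[OF pq(1) that 3] by simp
    qed
  qed
  define P where "P = x p * y p"
  have P0: "P > 0" using xpos ypos pq P_def by simp
  have ye: "y t = (P / exp A) * exp (- B * t)" if "t \<in> I" for t
  proof -
    have "y t = P / x t" using pc[OF that] xpos[OF that] P_def by (simp add: field_simps)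
    also have "\<dots> = P / (exp A * exp (B * t))" using xe[OF that] by simp
    also have "\<dots> = (P / exp A) * exp (- B * t)"
    proof -
      have ee: "exp (- B * t) = 1 / exp (B * t)" by (simp add: exp_minus inverse_eq_divide)
      show ?thesis unfolding ee by simp
    qed
    finally show ?thesis .
  qed
  show ?thesis
    using xe ye P0 B0 by (intro exI[of _ "exp A"] exI[of _ "P / exp A"] exI[of _ B]) auto
qed

lemma dps_classify:
  assumes ne: "I \<noteq> {}"
  shows "(\<exists>a b c d. b > 0 \<and> d > 0 \<and> (\<forall>t\<in>I. x t = a + b * t \<and> y t = c - d * t)) \<or>
         (\<exists>a b c. a > 0 \<and> b > 0 \<and> c > 0 \<and> (\<forall>t\<in>I. x t = a * exp (c * t) \<and> y t = b * exp (- c * t)))"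
proof (cases "\<exists>C \<gamma>. \<gamma> > 0 \<and> (\<forall>t\<in>I. y t = C - \<gamma> * x t)")
  case True
  then obtain C \<gamma> where "\<gamma> > 0" "\<forall>t\<in>I. y t = C - \<gamma> * x t" by blast
  from caseA[OF ne this] show ?thesis by (rule disjI1)
next
  case False
  have H: "\<exists>m>0. \<forall>t. t \<in> I \<and> t + w \<in> I \<longrightarrow> x (t+w) = m * x t \<and> y (t+w) = y t / m"
    if "w > 0" "t0 \<in> I" "t0 + 2 * w \<in> I" for w t0
  proof -
    interpret W: dpw I x y \<phi> w t0
      by (intro dpw.intro dps_axioms dpw_axioms.intro that)
    show ?thesis using W.shift_dich False by blast
  qed
  have "\<exists>a b c. a > 0 \<and> b > 0 \<and> c > 0 \<and> (\<forall>t\<in>I. x t = a * exp (c * t) \<and> y t = b * exp (- c * t))"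
    by (rule caseB[OF ne]) (rule H)
  then show ?thesis by (rule disjI2)
qed

end



context dp begin

lemma jensen_from_gap:
  assumes L: "is_interval L" "L \<subseteq> I" and cf: "continuous_on L f" and K: "K \<noteq> 0"
    and G: "\<And>s t. s \<in> L \<Longrightarrow> t \<in> L \<Longrightarrow> s < t \<Longrightarrow> \<phi> (t - s) = K * (f t - f s)"
  shows "\<exists>A B. \<forall>t\<in>L. f t = A + B * t"
proof (rule jensen_affine[OF L(1) cf])
  fix a b assume ab: "a \<in> L" "b \<in> L" "a < b"
  define mm where "mm = (a + b) / 2"
  have mL: "mm \<in> L" unfolding mm_def using mem_is_interval_1_I[OF L(1) ab(1,2), of "(a + b)/2"] ab by simp
  have am: "a < mm" "mm < b" unfolding mm_def using ab by auto
  have gap: "mm - a = b - mm" unfolding mm_def by (simp add: field_simps)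
  have e1: "\<phi> (mm - a) = K * (f mm - f a)" using G[OF ab(1) mL am(1)] .
  have e2: "\<phi> (b - mm) = K * (f b - f mm)" using G[OF mL ab(2) am(2)] .
  have "\<phi> (mm - a) = \<phi> (b - mm)" using gap by (rule arg_cong)
  then have "K * (f mm - f a) = K * (f b - f mm)" using e1 e2 by simp
  then have "f mm - f a = f b - f mm" using K by simp
  then show "f ((a + b) / 2) = (f a + f b) / 2" unfolding mm_def by simp
qed

lemma caseN_xconst:
  assumes ne: "I \<noteq> {}" and xk: "\<forall>t\<in>I. x t = k" and ync: "\<not> (\<exists>k. \<forall>t\<in>I. y t = k)"
  shows "\<exists>a b c. a > 0 \<and> c > 0 \<and> (\<forall>t\<in>I. x t = a \<and> y t = b - c * t)"
proof -
  obtain t1 where t1: "t1 \<in> I" using ne by blast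
  have k0: "k > 0" using xpos[OF t1] xk t1 by simp
  have G: "\<phi> (t - s) = k * (y s - y t)" if "s \<in> I" "t \<in> I" "s < t" for s t
    using feq[OF that] xk that by (simp add: algebra_simps)
  have "\<exists>A B. \<forall>t\<in>I. (\<lambda>t. - y t) t = A + B * t"
    by (rule jensen_from_gap[OF I_int subset_refl continuous_on_minus[OF ycont], of k])
       (use k0 G in \<open>auto simp: algebra_simps\<close>)
  then obtain A B where AB0: "\<forall>t\<in>I. - y t = A + B * t" by blast
  have AB: "\<forall>t\<in>I. y t = - A - B * t"
  proof
    fix t assume "t \<in> I"
    then have "- y t = A + B * t" using AB0 by blast
    then show "y t = - A - B * t" by linarith
  qed
  obtain t2 where t2: "t2 \<in> I" "y t2 \<noteq> y t1" using ync t1 by blast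
  have "B > 0"
  proof (cases "t1 < t2")
    case True
    then have "y t2 \<le> y t1" using ymono[of t1 t2] t1 t2 by simp
    then have "y t2 < y t1" using t2 by simp
    then have "B * t1 < B * t2" using AB t1 t2 by simp
    then have "B * (t2 - t1) > 0" by (simp add: right_diff_distrib)
    then show ?thesis using True by (simp add: zero_less_mult_iff)
  next
    case False
    moreover have "t2 \<noteq> t1" using t2 by auto
    ultimately have "t2 < t1" by simp
    then have "y t1 \<le> y t2" using ymono[of t2 t1] t1 t2 by simp
    then have "y t1 < y t2" using t2 by simp
    then have "B * t2 < B * t1" using AB t1 t2 by simp
    then have "B * (t1 - t2) > 0" by (simp add: right_diff_distrib)
    then show ?thesis using \<open>t2 < t1\<close> by (simp add: zero_less_mult_iff)
  qed
  then show ?thesis using AB xk k0 by (intro exI[of _ k] exI[of _ "- A"] exI[of _ B]) auto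
qed

lemma caseN_yconst:
  assumes ne: "I \<noteq> {}" and yk: "\<forall>t\<in>I. y t = k" and xnc: "\<not> (\<exists>k. \<forall>t\<in>I. x t = k)"
  shows "\<exists>a b c. a > 0 \<and> c > 0 \<and> (\<forall>t\<in>I. x t = b + c * t \<and> y t = a)"
proof -
  obtain t1 where t1: "t1 \<in> I" using ne by blast
  have k0: "k > 0" using ypos[OF t1] yk t1 by simp
  have G: "\<phi> (t - s) = k * (x t - x s)" if "s \<in> I" "t \<in> I" "s < t" for s t
    using feq[OF that] yk that by (simp add: algebra_simps)
  have "\<exists>A B. \<forall>t\<in>I. x t = A + B * t"
    by (rule jensen_from_gap[OF I_int subset_refl xcont, of k]) (use k0 G in auto)
  then obtain A B where AB: "\<forall>t\<in>I. x t = A + B * t" by blast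
  obtain t2 where t2: "t2 \<in> I" "x t2 \<noteq> x t1" using xnc t1 by blast
  have "B > 0"
  proof (cases "t1 < t2")
    case True
    then have "x t1 \<le> x t2" using xmono[of t1 t2] t1 t2 by simp
    then have "x t1 < x t2" using t2 by simp
    then have "B * t1 < B * t2" using AB t1 t2 by simp
    then have "B * (t2 - t1) > 0" by (simp add: right_diff_distrib)
    then show ?thesis using True by (simp add: zero_less_mult_iff)
  next
    case False
    moreover have "t2 \<noteq> t1" using t2 by auto
    ultimately have lt: "t2 < t1" by simp
    then have "x t2 \<le> x t1" using xmono[of t2 t1] t1 t2 by simp
    then have "x t2 < x t1" using t2 by simp
    then have "B * t2 < B * t1" using AB t1 t2 by simp
    then have "B * (t1 - t2) > 0" by (simp add: right_diff_distrib)
    then show ?thesis using lt by (simp add: zero_less_mult_iff)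
  qed
  then show ?thesis using AB yk k0 by (intro exI[of _ k] exI[of _ A] exI[of _ B]) auto
qed

lemma caseN_both:
  assumes N: "\<And>s t r. s \<in> I \<Longrightarrow> t \<in> I \<Longrightarrow> r \<in> I \<Longrightarrow> s < t \<Longrightarrow> t < r \<Longrightarrow> x s = x t \<or> y t = y r"
    and xnc: "\<not> (\<exists>k. \<forall>t\<in>I. x t = k)" and ync: "\<not> (\<exists>k. \<forall>t\<in>I. y t = k)"
  shows "\<exists>s0 a b c d. s0 \<in> I \<and> a > 0 \<and> b > 0 \<and> c > 0 \<and> d > 0 \<and> a * c = b * d \<and>
        (\<forall>t\<in>I. x t = a + d * (t - s0) * (if t > s0 then 1 else 0) \<and>
                 y t = b - c * (t - s0) * (if t \<le> s0 then 1 else 0))"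
proof -
  have ex_lt_y: "\<exists>p q. p \<in> I \<and> q \<in> I \<and> p < q \<and> y q < y p"
  proof -
    have "I \<noteq> {}" using ync by auto
    then obtain t1 where t1: "t1 \<in> I" by blast
    obtain t2 where t2: "t2 \<in> I" "y t2 \<noteq> y t1" using ync t1 by blast
    show ?thesis
    proof (cases "t1 < t2")
      case True
      then have "y t2 \<le> y t1" using ymono[of t1 t2] t1 t2 by simp
      then show ?thesis using t1 t2 True by (intro exI[of _ t1] exI[of _ t2]) auto
    next
      case False
      moreover have "t2 \<noteq> t1" using t2 by auto
      ultimately have lt: "t2 < t1" by simp
      then have "y t1 \<le> y t2" using ymono[of t2 t1] t1 t2 by simp
      then show ?thesis using t1 t2 lt by (intro exI[of _ t2] exI[of _ t1]) auto
    qed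
  qed
  have ex_lt_x: "\<exists>p q. p \<in> I \<and> q \<in> I \<and> p < q \<and> x p < x q"
  proof -
    have "I \<noteq> {}" using xnc by auto
    then obtain t1 where t1: "t1 \<in> I" by blast
    obtain t2 where t2: "t2 \<in> I" "x t2 \<noteq> x t1" using xnc t1 by blast
    show ?thesis
    proof (cases "t1 < t2")
      case True
      then have "x t1 \<le> x t2" using xmono[of t1 t2] t1 t2 by simp
      then show ?thesis using t1 t2 True by (intro exI[of _ t1] exI[of _ t2]) auto
    next
      case False
      moreover have "t2 \<noteq> t1" using t2 by auto
      ultimately have lt: "t2 < t1" by simp
      then have "x t2 \<le> x t1" using xmono[of t2 t1] t1 t2 by simp
      then show ?thesis using t1 t2 lt by (intro exI[of _ t2] exI[of _ t1]) auto
    qed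
  qed
  obtain p q where pq: "p \<in> I" "q \<in> I" "p < q" "y q < y p" using ex_lt_y by blast
  obtain p' q' where pq': "p' \<in> I" "q' \<in> I" "p' < q'" "x p' < x q'" using ex_lt_x by blast
  have xleft: "x t = x p" if "t \<in> I" "t \<le> p" for t
  proof (cases "t = p")
    case False
    then have "t < p" using that by simp
    then show ?thesis using N[OF that(1) pq(1) pq(2) _ pq(3)] pq(4) by auto
  qed simp
  have yright: "y t = y q'" if "t \<in> I" "q' \<le> t" for t
  proof (cases "t = q'")
    case False
    then have "q' < t" using that by simp
    then show ?thesis using N[OF pq'(1) pq'(2) that(1) pq'(3)] pq'(4) by auto
  qed simp
  have pq'1: "p < q'"
  proof (rule ccontr)
    assume "\<not> p < q'"
    then have "q' \<le> p" by simp
    then have "x q' = x p" "x p' = x p" using xleft[OF pq'(2)] xleft[OF pq'(1)] pq'(3) by auto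
    then show False using pq' by simp
  qed
  have xpq: "x p < x q'"
  proof (cases "p' \<le> p")
    case True then show ?thesis using xleft[OF pq'(1) True] pq' by simp
  next
    case False
    then have "x p \<le> x p'" using xmono[of p p'] pq pq' by simp
    then show ?thesis using pq' by simp
  qed
  have ypq: "y q' < y p"
  proof (cases "q \<le> q'")
    case True
    then have "y q' \<le> y q" using ymono[of q q'] pq pq' by simp
    then show ?thesis using pq by simp
  next
    case False
    then have "y q = y q'" using yright[OF pq(2)] by simp
    then show ?thesis using pq by simp
  qed
  have sub: "{p..q'} \<subseteq> I" using betw_sub pq(1) pq'(2) by blast
  have "\<exists>c. p \<le> c \<and> c < q' \<and> x c = x p \<and> (\<forall>t. c < t \<and> t \<le> q' \<longrightarrow> x c < x t)"
  proof (rule V1)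
    show "continuous_on {p..q'} x" using continuous_on_subset[OF xcont sub] .
    show "\<And>s t. p \<le> s \<Longrightarrow> s \<le> t \<Longrightarrow> t \<le> q' \<Longrightarrow> x s \<le> x t"
    proof -
      fix s t assume "p \<le> s" "s \<le> t" "t \<le> q'"
      then have "s \<in> I" "t \<in> I" using sub by auto
      then show "x s \<le> x t" using xmono \<open>s \<le> t\<close> by blast
    qed
  qed (use pq'1 xpq in auto)
  then obtain c1 where c1: "p \<le> c1" "c1 < q'" "x c1 = x p" "\<forall>t. c1 < t \<and> t \<le> q' \<longrightarrow> x c1 < x t"
    by blast
  have "\<exists>c. p < c \<and> c \<le> q' \<and> - y c = - y q' \<and> (\<forall>t. p \<le> t \<and> t < c \<longrightarrow> - y t < - y c)"
  proof (rule V2)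
    show "continuous_on {p..q'} (\<lambda>t. - y t)" using continuous_on_minus[OF continuous_on_subset[OF ycont sub]] .
    show "\<And>s t. p \<le> s \<Longrightarrow> s \<le> t \<Longrightarrow> t \<le> q' \<Longrightarrow> - y s \<le> - y t"
    proof -
      fix s t assume "p \<le> s" "s \<le> t" "t \<le> q'"
      then have "s \<in> I" "t \<in> I" using sub by auto
      then show "- y s \<le> - y t" using ymono \<open>s \<le> t\<close> by force
    qed
  qed (use pq'1 ypq in auto)
  then obtain c2 where c2: "p < c2" "c2 \<le> q'" "y c2 = y q'" "\<forall>t. p \<le> t \<and> t < c2 \<longrightarrow> y c2 < y t"
    by auto
  have c21: "c2 \<le> c1"
  proof (rule ccontr)
    assume "\<not> c2 \<le> c1"
    then have lt: "c1 < c2" by simp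
    define t where "t = (c1 + c2) / 2"
    have tt: "c1 < t" "t < c2" unfolding t_def using lt by auto
    have I3: "c1 \<in> I" "t \<in> I" "c2 \<in> I" using sub c1 c2 tt by auto
    have "x c1 < x t" using c1 tt c2 by auto
    moreover have "y c2 < y t" using c2 tt c1 by auto
    ultimately show False using N[OF I3 tt] by auto
  qed
  define s0 where "s0 = c1"
  define a where "a = x p"
  define b where "b = y q'"
  have s0I: "s0 \<in> I" using sub c1 s0_def pq'1 by auto
  have a0: "a > 0" using xpos pq a_def by simp
  have b0: "b > 0" using ypos pq' b_def by simp
  have xl: "x t = a" if "t \<in> I" "t \<le> s0" for t
  proof (cases "t \<le> p")
    case True then show ?thesis using xleft[OF that(1) True] a_def by simp
  next
    case False
    then have "x p \<le> x t" "x t \<le> x s0" using xmono[of p t] xmono[of t s0] pq that s0I by auto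
    then show ?thesis using c1 s0_def a_def by simp
  qed
  have yr: "y t = b" if "t \<in> I" "s0 \<le> t" for t
  proof (cases "q' \<le> t")
    case True then show ?thesis using yright[OF that(1) True] b_def by simp
  next
    case False
    then have c2t: "c2 \<le> t" using c21 that s0_def by simp
    have c2I: "c2 \<in> I" using sub c2 by auto
    have "y q' \<le> y t" "y t \<le> y c2" using ymono[of t q'] ymono[of c2 t] pq' that c2I c2t False by auto
    then show ?thesis using c2 b_def by simp
  qed
  have xs0: "x s0 = a" using xl s0I by simp
  have ys0: "y s0 = b" using yr s0I by simp
  define L where "L = I \<inter> {..s0}"
  define R where "R = I \<inter> {s0..}"
  have Lint: "is_interval L" unfolding L_def using I_int by (simp add: is_interval_Int is_interval_ic)
  have Rint: "is_interval R" unfolding R_def using I_int by (simp add: is_interval_Int is_interval_ci)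
  have GL: "\<phi> (t - s) = a * (y s - y t)" if "s \<in> L" "t \<in> L" "s < t" for s t
  proof -
    have "s \<in> I" "t \<in> I" "s \<le> s0" "t \<le> s0" using that L_def by auto
    then show ?thesis using feq[of s t] xl[of s] xl[of t] that by (simp add: algebra_simps)
  qed
  have GR: "\<phi> (t - s) = b * (x t - x s)" if "s \<in> R" "t \<in> R" "s < t" for s t
  proof -
    have "s \<in> I" "t \<in> I" "s0 \<le> s" "s0 \<le> t" using that R_def by auto
    then show ?thesis using feq[of s t] yr[of s] yr[of t] that by (simp add: algebra_simps)
  qed
  have "\<exists>A B. \<forall>t\<in>L. (\<lambda>t. - y t) t = A + B * t"
    by (rule jensen_from_gap[OF Lint _ continuous_on_minus[OF continuous_on_subset[OF ycont]], of a])
       (use a0 GL L_def in \<open>auto simp: algebra_simps\<close>)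
  then obtain A1 B1 where AB1: "\<forall>t\<in>L. - y t = A1 + B1 * t" by blast
  have "\<exists>A B. \<forall>t\<in>R. x t = A + B * t"
    by (rule jensen_from_gap[OF Rint _ continuous_on_subset[OF xcont], of b])
       (use b0 GR R_def in auto)
  then obtain A2 B2 where AB2: "\<forall>t\<in>R. x t = A2 + B2 * t" by blast
  define c where "c = B1"
  define d where "d = B2"
  have yL: "y t = b - c * (t - s0)" if "t \<in> I" "t \<le> s0" for t
  proof -
    have "t \<in> L" "s0 \<in> L" using that s0I L_def by auto
    then have "- y t = A1 + B1 * t" "- y s0 = A1 + B1 * s0" using AB1 by auto
    then show ?thesis using ys0 c_def by (simp add: algebra_simps)
  qed
  have xR: "x t = a + d * (t - s0)" if "t \<in> I" "s0 \<le> t" for t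
  proof -
    have "t \<in> R" "s0 \<in> R" using that s0I R_def by auto
    then have "x t = A2 + B2 * t" "x s0 = A2 + B2 * s0" using AB2 by auto
    then show ?thesis using xs0 d_def by (simp add: algebra_simps)
  qed
  have c0: "c > 0"
  proof -
    have ps: "p \<le> s0" using c1 s0_def by simp
    have "y p = b - c * (p - s0)" using yL pq ps by simp
    moreover have "b < y p" using ypq b_def by simp
    ultimately have "c * (s0 - p) > 0" by (simp add: algebra_simps)
    then show ?thesis using ps by (simp add: zero_less_mult_iff)
  qed
  have d0: "d > 0"
  proof -
    have qs: "s0 < q'" using c1 s0_def by simp
    have "x q' = a + d * (q' - s0)" using xR pq' qs by simp
    moreover have "a < x q'" using c1 s0_def a_def qs by auto
    ultimately have "d * (q' - s0) > 0" by (simp add: algebra_simps)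
    then show ?thesis using qs by (simp add: zero_less_mult_iff)
  qed
  have acbd: "a * c = b * d"
  proof -
    obtain e where e: "e > 0" "\<forall>z. \<bar>z - s0\<bar> < e \<longrightarrow> z \<in> I" using openI[OF s0I] by blast
    define h where "h = e / 4"
    have h0: "h > 0" using e h_def by simp
    have pts: "s0 - 3 * h \<in> I" "s0 - 2 * h \<in> I" "s0 + h \<in> I" using e h_def by auto
    have F: "x (s0 - 2*h) * y (s0 - 2*h) + x (s0 + h) * y (s0 + h) - 2 * x (s0 - 2*h) * y (s0 + h) =
             x (s0 - 3*h) * y (s0 - 3*h) + x s0 * y s0 - 2 * x (s0 - 3*h) * y s0"
      by (rule Fshift) (use pts s0I h0 in auto)
    have v: "x (s0 - 2*h) = a" "x (s0 - 3*h) = a" "x (s0 + h) = a + d * h"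
         "y (s0 - 2*h) = b + 2 * c * h" "y (s0 - 3*h) = b + 3 * c * h" "y (s0 + h) = b"
      using xl[OF pts(2)] xl[OF pts(1)] xR[OF pts(3)] yL[OF pts(2)] yL[OF pts(1)] yr[OF pts(3)] h0
      by (auto simp: algebra_simps)
    have "(a * c - b * d) * h = 0" using F v xs0 ys0 by algebra
    then show ?thesis using h0 by simp
  qed
  have "\<forall>t\<in>I. x t = a + d * (t - s0) * (if t > s0 then 1 else 0) \<and>
                 y t = b - c * (t - s0) * (if t \<le> s0 then 1 else 0)"
  proof
    fix t assume tI: "t \<in> I"
    show "x t = a + d * (t - s0) * (if t > s0 then 1 else 0) \<and> y t = b - c * (t - s0) * (if t \<le> s0 then 1 else 0)"
    proof (cases "t \<le> s0")
      case True then show ?thesis using xl[OF tI] yL[OF tI] by simp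
    next
      case False then show ?thesis using xR[OF tI] yr[OF tI] by simp
    qed
  qed
  then show ?thesis using s0I a0 b0 c0 d0 acbd
    by (intro exI[of _ s0] exI[of _ a] exI[of _ b] exI[of _ c] exI[of _ d]) simp
qed

end

definition shapes :: "real set \<Rightarrow> real set \<Rightarrow> (real \<Rightarrow> real) \<Rightarrow> (real \<Rightarrow> real) \<Rightarrow> bool" where
  "shapes T S0 x y \<longleftrightarrow>
     ((\<exists>a b c. a > 0 \<and> c > 0 \<and>
        ((\<forall>t\<in>T. x t = a \<and> y t = b - c * t) \<or> (\<forall>t\<in>T. x t = b + c * t \<and> y t = a))) \<or>
      (\<exists>s0 a b c d. s0 \<in> S0 \<and> a > 0 \<and> b > 0 \<and> c > 0 \<and> d > 0 \<and> a * c = b * d \<and>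
        (\<forall>t\<in>T. x t = a + d * (t - s0) * (if t > s0 then 1 else 0) \<and>
                 y t = b - c * (t - s0) * (if t \<le> s0 then 1 else 0))) \<or>
      (\<exists>a b c d. b > 0 \<and> d > 0 \<and> (\<forall>t\<in>T. x t = a + b * t \<and> y t = c - d * t)) \<or>
      (\<exists>a b c. a > 0 \<and> b > 0 \<and> c > 0 \<and> (\<forall>t\<in>T. x t = a * exp (c * t) \<and> y t = b * exp (- c * t))))"

lemma shapes_1a: assumes "\<exists>a b c. a > 0 \<and> c > 0 \<and> (\<forall>t\<in>T. x t = a \<and> y t = b - c * t)"
  shows "shapes T S0 x y"
proof -
  from assms obtain a b c where h: "a > 0" "c > 0" "\<forall>t\<in>T. x t = a \<and> y t = b - c * t" by blast
  show ?thesis unfolding shapes_def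
    by (rule disjI1, rule exI[of _ a], rule exI[of _ b], rule exI[of _ c]) (use h in simp)
qed

lemma shapes_1b: assumes "\<exists>a b c. a > 0 \<and> c > 0 \<and> (\<forall>t\<in>T. x t = b + c * t \<and> y t = a)"
  shows "shapes T S0 x y"
proof -
  from assms obtain a b c where h: "a > 0" "c > 0" "\<forall>t\<in>T. x t = b + c * t \<and> y t = a" by blast
  show ?thesis unfolding shapes_def
    by (rule disjI1, rule exI[of _ a], rule exI[of _ b], rule exI[of _ c]) (use h in simp)
qed

lemma shapes_2: assumes "\<exists>s0 a b c d. s0 \<in> S0 \<and> a > 0 \<and> b > 0 \<and> c > 0 \<and> d > 0 \<and> a * c = b * d \<and>
        (\<forall>t\<in>T. x t = a + d * (t - s0) * (if t > s0 then 1 else 0) \<and>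
                 y t = b - c * (t - s0) * (if t \<le> s0 then 1 else 0))"
  shows "shapes T S0 x y"
  unfolding shapes_def by (rule disjI2, rule disjI1, rule assms)

lemma shapes_34: assumes "(\<exists>a b c d. b > 0 \<and> d > 0 \<and> (\<forall>t\<in>T. x t = a + b * t \<and> y t = c - d * t)) \<or>
         (\<exists>a b c. a > 0 \<and> b > 0 \<and> c > 0 \<and> (\<forall>t\<in>T. x t = a * exp (c * t) \<and> y t = b * exp (- c * t)))"
  shows "shapes T S0 x y"
  unfolding shapes_def by (rule disjI2, rule disjI2, rule assms)

context dp begin

lemma dp_classify:
  assumes ne: "I \<noteq> {}" and nc: "\<not> ((\<exists>k. \<forall>t\<in>I. x t = k) \<and> (\<exists>k. \<forall>t\<in>I. y t = k))"
  shows "shapes I I x y"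
proof (cases "\<exists>s0 t0 r0. s0 \<in> I \<and> t0 \<in> I \<and> r0 \<in> I \<and> s0 < t0 \<and> t0 < r0 \<and> x s0 < x t0 \<and> y r0 < y t0")
  case True
  then obtain s0 t0 r0 where st: "s0 \<in> I" "t0 \<in> I" "r0 \<in> I" "s0 < t0" "t0 < r0" "x s0 < x t0" "y r0 < y t0"
    by blast
  obtain c where c: "c \<in> I" "\<forall>t\<in>I. t < c \<longrightarrow> x t < x c" "\<forall>t\<in>I. c < t \<longrightarrow> y t < y c"
    using strict_point[OF st] by blast
  interpret S: dps I x y \<phi>
  proof unfold_locales
    fix a b assume "a \<in> I" "b \<in> I" "a < b"
    then show "x a < x b" "y b < y a" using strict_mono[OF c] by auto
  qed
  have "(\<exists>a b c d. b > 0 \<and> d > 0 \<and> (\<forall>t\<in>I. x t = a + b * t \<and> y t = c - d * t)) \<or>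
         (\<exists>a b c. a > 0 \<and> b > 0 \<and> c > 0 \<and> (\<forall>t\<in>I. x t = a * exp (c * t) \<and> y t = b * exp (- c * t)))"
    using S.dps_classify[OF ne] .
  then show ?thesis by (rule shapes_34)
next
  case False
  have N: "x s = x t \<or> y t = y r" if "s \<in> I" "t \<in> I" "r \<in> I" "s < t" "t < r" for s t r
  proof -
    have "x s \<le> x t" "y r \<le> y t" using xmono ymono that by auto
    show ?thesis
    proof (rule ccontr)
      assume "\<not> (x s = x t \<or> y t = y r)"
      then have "x s < x t" "y r < y t" using \<open>x s \<le> x t\<close> \<open>y r \<le> y t\<close> by auto
      then show False using False that by blast
    qed
  qed
  show ?thesis
  proof (cases "\<exists>k. \<forall>t\<in>I. x t = k")
    case True
    then obtain k where k: "\<forall>t\<in>I. x t = k" by blast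
    have "\<not> (\<exists>k. \<forall>t\<in>I. y t = k)" using nc True by blast
    from caseN_xconst[OF ne k this] show ?thesis by (rule shapes_1a)
  next
    case xnc: False
    show ?thesis
    proof (cases "\<exists>k. \<forall>t\<in>I. y t = k")
      case True
      then obtain k where k: "\<forall>t\<in>I. y t = k" by blast
      from caseN_yconst[OF ne k xnc] show ?thesis by (rule shapes_1b)
    next
      case False
      from caseN_both[OF N xnc False] show ?thesis by (rule shapes_2)
    qed
  qed
qed

end


lemma ext_eq:
  fixes f g :: "real \<Rightarrow> real"
  assumes cT: "convex T" and ne: "interior T \<noteq> {}" and cf: "continuous_on T f" and cg: "continuous_on T g"
    and eq: "\<forall>t\<in>interior T. f t = g t"
  shows "\<forall>t\<in>T. f t = g t"
proof
  fix t assume tT: "t \<in> T"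
  show "f t = g t"
  proof (cases "t \<in> interior T")
    case True then show ?thesis using eq by blast
  next
    case False
    have "t \<in> closure T" using tT closure_subset by blast
    then have "t \<in> closure (interior T)" using convex_closure_interior[OF cT ne] by simp
    then have lp: "t islimpt interior T" using False closure_def by auto
    define h where "h s = f s - g s" for s
    have ch: "continuous_on T h" unfolding h_def using cf cg by (intro continuous_intros)
    have "(h \<longlongrightarrow> h t) (at t within T)" using ch tT continuous_on_def by blast
    then have l1: "(h \<longlongrightarrow> h t) (at t within interior T)" using interior_subset by (rule tendsto_within_subset)
    have "eventually (\<lambda>s. h s = 0) (at t within interior T)"
      unfolding eventually_at_filter using eq h_def by (simp add: always_eventually)
    then have l2: "(h \<longlongrightarrow> 0) (at t within interior T)" by (rule tendsto_eventually)
    have "\<not> trivial_limit (at t within interior T)" using lp trivial_limit_within by blast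
    then have "h t = 0" using tendsto_unique l1 l2 by blast
    then show ?thesis unfolding h_def by simp
  qed
qed

lemma if_max: "(t - s0) * (if t > s0 then 1 else 0) = max 0 (t - s0 :: real)" by auto
lemma if_min: "(t - s0) * (if t \<le> s0 then 1 else 0) = min 0 (t - s0 :: real)" by auto

lemma shapes_ext:
  fixes x y :: "real \<Rightarrow> real"
  assumes cT: "convex T" and ne: "interior T \<noteq> {}" and cx: "continuous_on T x" and cy: "continuous_on T y"
    and sh: "shapes (interior T) (interior T) x y"
  shows "shapes T (interior T) x y"
proof -
  note E = ext_eq[OF cT ne]
  have "(\<exists>a b c. a > 0 \<and> c > 0 \<and>
        ((\<forall>t\<in>interior T. x t = a \<and> y t = b - c * t) \<or> (\<forall>t\<in>interior T. x t = b + c * t \<and> y t = a))) \<or>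
      (\<exists>s0 a b c d. s0 \<in> interior T \<and> a > 0 \<and> b > 0 \<and> c > 0 \<and> d > 0 \<and> a * c = b * d \<and>
        (\<forall>t\<in>interior T. x t = a + d * (t - s0) * (if t > s0 then 1 else 0) \<and>
                 y t = b - c * (t - s0) * (if t \<le> s0 then 1 else 0))) \<or>
      (\<exists>a b c d. b > 0 \<and> d > 0 \<and> (\<forall>t\<in>interior T. x t = a + b * t \<and> y t = c - d * t)) \<or>
      (\<exists>a b c. a > 0 \<and> b > 0 \<and> c > 0 \<and> (\<forall>t\<in>interior T. x t = a * exp (c * t) \<and> y t = b * exp (- c * t)))"
    using sh unfolding shapes_def .
  then show ?thesis
  proof (elim disjE exE conjE)
    fix a b c assume h: "a > 0" "c > 0" "\<forall>t\<in>interior T. x t = a \<and> y t = b - c * t"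
    have "\<forall>t\<in>T. x t = a" using E[OF cx continuous_on_const] h by auto
    moreover have "\<forall>t\<in>T. y t = b - c * t" by (rule E[OF cy]) (use h in \<open>auto intro!: continuous_intros\<close>)
    ultimately have "\<forall>t\<in>T. x t = a \<and> y t = b - c * t" by simp
    then show ?thesis using h by (intro shapes_1a exI[of _ a] exI[of _ b] exI[of _ c]) simp
  next
    fix a b c assume h: "a > 0" "c > 0" "\<forall>t\<in>interior T. x t = b + c * t \<and> y t = a"
    have "\<forall>t\<in>T. y t = a" using E[OF cy continuous_on_const] h by auto
    moreover have "\<forall>t\<in>T. x t = b + c * t" by (rule E[OF cx]) (use h in \<open>auto intro!: continuous_intros\<close>)
    ultimately have "\<forall>t\<in>T. x t = b + c * t \<and> y t = a" by simp
    then show ?thesis using h by (intro shapes_1b exI[of _ a] exI[of _ b] exI[of _ c]) simp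
  next
    fix s0 a b c d assume h: "s0 \<in> interior T" "a > 0" "b > 0" "c > 0" "d > 0" "a * c = b * d"
        "\<forall>t\<in>interior T. x t = a + d * (t - s0) * (if t > s0 then 1 else 0) \<and>
                 y t = b - c * (t - s0) * (if t \<le> s0 then 1 else 0)"
    have h': "\<forall>t\<in>interior T. x t = a + d * max 0 (t - s0) \<and> y t = b - c * min 0 (t - s0)"
      using h(7) unfolding mult.assoc if_max if_min .
    have "\<forall>t\<in>T. x t = a + d * max 0 (t - s0)"
      by (rule E[OF cx]) (use h' in \<open>auto intro!: continuous_intros\<close>)
    moreover have "\<forall>t\<in>T. y t = b - c * min 0 (t - s0)"
      by (rule E[OF cy]) (use h' in \<open>auto intro!: continuous_intros\<close>)
    ultimately have "\<forall>t\<in>T. x t = a + d * (t - s0) * (if t > s0 then 1 else 0) \<and>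
                 y t = b - c * (t - s0) * (if t \<le> s0 then 1 else 0)" unfolding mult.assoc if_max if_min by simp
    then show ?thesis using h
      by (intro shapes_2 exI[of _ s0] exI[of _ a] exI[of _ b] exI[of _ c] exI[of _ d]) simp
  next
    fix a b c d assume h: "b > 0" "d > 0" "\<forall>t\<in>interior T. x t = a + b * t \<and> y t = c - d * t"
    have "\<forall>t\<in>T. x t = a + b * t" by (rule E[OF cx]) (use h in \<open>auto intro!: continuous_intros\<close>)
    moreover have "\<forall>t\<in>T. y t = c - d * t" by (rule E[OF cy]) (use h in \<open>auto intro!: continuous_intros\<close>)
    ultimately have "\<forall>t\<in>T. x t = a + b * t \<and> y t = c - d * t" by simp
    then show ?thesis using h
      by (intro shapes_34 disjI1 exI[of _ a] exI[of _ b] exI[of _ c] exI[of _ d]) simp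
  next
    fix a b c assume h: "a > 0" "b > 0" "c > 0" "\<forall>t\<in>interior T. x t = a * exp (c * t) \<and> y t = b * exp (- c * t)"
    have "\<forall>t\<in>T. x t = a * exp (c * t)" by (rule E[OF cx]) (use h in \<open>auto intro!: continuous_intros\<close>)
    moreover have "\<forall>t\<in>T. y t = b * exp (- c * t)" by (rule E[OF cy]) (use h in \<open>auto intro!: continuous_intros\<close>)
    ultimately have "\<forall>t\<in>T. x t = a * exp (c * t) \<and> y t = b * exp (- c * t)" by simp
    then show ?thesis using h
      by (intro shapes_34 disjI2 exI[of _ a] exI[of _ b] exI[of _ c]) simp
  qed
qed

lemma F1a: fixes x y :: "real \<Rightarrow> real" assumes "\<forall>t\<in>T. x t = a \<and> y t = b - c * t" "s \<in> T" "t \<in> T"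
  shows "x s * y s + x t * y t - 2 * x s * y t = a * c * (t - s)"
proof -
  have h: "x s = a" "y s = b - c * s" "x t = a" "y t = b - c * t" using assms by auto
  show ?thesis unfolding h by (simp add: algebra_simps)
qed

lemma F1b: fixes x y :: "real \<Rightarrow> real" assumes "\<forall>t\<in>T. x t = b + c * t \<and> y t = a" "s \<in> T" "t \<in> T"
  shows "x s * y s + x t * y t - 2 * x s * y t = a * c * (t - s)"
proof -
  have h: "x s = b + c * s" "y s = a" "x t = b + c * t" "y t = a" using assms by auto
  show ?thesis unfolding h by (simp add: algebra_simps)
qed

lemma F2: fixes x y :: "real \<Rightarrow> real" assumes "\<forall>t\<in>T. x t = a + d * (t - s0) * (if t > s0 then 1 else 0) \<and>
                 y t = b - c * (t - s0) * (if t \<le> s0 then 1 else 0)" "a * c = b * d" "s \<in> T" "t \<in> T" "s < t"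
  shows "x s * y s + x t * y t - 2 * x s * y t = a * c * (t - s)"
proof -
  have xs: "x s = a + d * (s - s0) * (if s > s0 then 1 else 0)" "y s = b - c * (s - s0) * (if s \<le> s0 then 1 else 0)"
    and xt: "x t = a + d * (t - s0) * (if t > s0 then 1 else 0)" "y t = b - c * (t - s0) * (if t \<le> s0 then 1 else 0)"
    using assms by auto
  consider "t \<le> s0" | "s0 < s" | "s \<le> s0" "s0 < t" using assms by linarith
  then show ?thesis
  proof cases
    case 1
    then have "s \<le> s0" using assms by simp
    then have h: "x s = a" "y s = b - c * (s - s0)" "x t = a" "y t = b - c * (t - s0)" using xs xt 1 by auto
    show ?thesis unfolding h by (simp add: algebra_simps)
  next
    case 2
    then have "s0 < t" using assms by simp
    then have h: "x s = a + d * (s - s0)" "y s = b" "x t = a + d * (t - s0)" "y t = b" using xs xt 2 by auto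
    have "x s * y s + x t * y t - 2 * x s * y t = b * d * (t - s)" unfolding h by (simp add: algebra_simps)
    then show ?thesis using assms(2) by simp
  next
    case 3
    then have h: "x s = a" "y s = b - c * (s - s0)" "x t = a + d * (t - s0)" "y t = b" using xs xt by auto
    have "x s * y s + x t * y t - 2 * x s * y t = a * c * (s0 - s) + b * d * (t - s0)"
      unfolding h by (simp add: algebra_simps)
    then show ?thesis using assms(2) by (simp add: algebra_simps)
  qed
qed

lemma F3: fixes x y :: "real \<Rightarrow> real" assumes "\<forall>t\<in>T. x t = a + b * t \<and> y t = c - d * t" "s \<in> T" "t \<in> T"
  shows "x s * y s + x t * y t - 2 * x s * y t = (a * d + b * c) * (t - s) - b * d * (t - s)\<^sup>2"
proof -
  have h: "x s = a + b * s" "y s = c - d * s" "x t = a + b * t" "y t = c - d * t" using assms by auto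
  show ?thesis unfolding h by (simp add: algebra_simps power2_eq_square)
qed

lemma F4: fixes x y :: "real \<Rightarrow> real" assumes "\<forall>t\<in>T. x t = a * exp (c * t) \<and> y t = b * exp (- c * t)" "s \<in> T" "t \<in> T"
  shows "x s * y s + x t * y t - 2 * x s * y t = 2 * a * b * (1 - exp (- c * (t - s)))"
proof -
  have e1: "exp (- c * s) = 1 / exp (c * s)" by (simp add: exp_minus inverse_eq_divide)
  have e2: "exp (- c * t) = 1 / exp (c * t)" by (simp add: exp_minus inverse_eq_divide)
  have "- c * (t - s) = c * s - c * t" by (simp add: algebra_simps)
  then have e3: "exp (- c * (t - s)) = exp (c * s) / exp (c * t)" by (simp add: exp_diff)
  have h: "x s = a * exp (c * s)" "y s = b / exp (c * s)" "x t = a * exp (c * t)" "y t = b / exp (c * t)"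
    using assms e1 e2 by auto
  have p1: "exp (c * s) \<noteq> 0" "exp (c * t) \<noteq> 0" by auto
  show ?thesis unfolding h e3 using p1 by (simp add: field_simps)
qed

theorem lemma2:
  fixes T :: "real set" and x y :: "real \<Rightarrow> real"
  assumes "decreasing_path T x y"
  defines "D \<equiv> {t - s | s t. s \<in> T \<and> t \<in> T \<and> t > s}"
  shows "((\<exists>\<phi>. path_eq T x y \<phi>) \<longleftrightarrow>
     ((\<exists>a b c. a > 0 \<and> c > 0 \<and>
        ((\<forall>t\<in>T. x t = a \<and> y t = b - c * t) \<or> (\<forall>t\<in>T. x t = b + c * t \<and> y t = a))) \<or>
      (\<exists>s0 a b c d. s0 \<in> interior T \<and> a > 0 \<and> b > 0 \<and> c > 0 \<and> d > 0 \<and> a * c = b * d \<and>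
        (\<forall>t\<in>T. x t = a + d * (t - s0) * (if t > s0 then 1 else 0) \<and>
                 y t = b - c * (t - s0) * (if t \<le> s0 then 1 else 0))) \<or>
      (\<exists>a b c d. b > 0 \<and> d > 0 \<and> (\<forall>t\<in>T. x t = a + b * t \<and> y t = c - d * t)) \<or>
      (\<exists>a b c. a > 0 \<and> b > 0 \<and> c > 0 \<and> (\<forall>t\<in>T. x t = a * exp (c * t) \<and> y t = b * exp (- c * t)))))
   \<and>
   (\<forall>\<phi>. path_eq T x y \<phi> \<longrightarrow>
     ((\<exists>a b c. a > 0 \<and> c > 0 \<and>
        ((\<forall>t\<in>T. x t = a \<and> y t = b - c * t) \<or> (\<forall>t\<in>T. x t = b + c * t \<and> y t = a)) \<and>
        (\<forall>u\<in>D. \<phi> u = a * c * u)) \<or>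
      (\<exists>s0 a b c d. s0 \<in> interior T \<and> a > 0 \<and> b > 0 \<and> c > 0 \<and> d > 0 \<and> a * c = b * d \<and>
        (\<forall>t\<in>T. x t = a + d * (t - s0) * (if t > s0 then 1 else 0) \<and>
                 y t = b - c * (t - s0) * (if t \<le> s0 then 1 else 0)) \<and>
        (\<forall>u\<in>D. \<phi> u = a * c * u)) \<or>
      (\<exists>a b c d. b > 0 \<and> d > 0 \<and> (\<forall>t\<in>T. x t = a + b * t \<and> y t = c - d * t) \<and>
        (\<forall>u\<in>D. \<phi> u = (a * d + b * c) * u - b * d * u\<^sup>2)) \<or>
      (\<exists>a b c. a > 0 \<and> b > 0 \<and> c > 0 \<and> (\<forall>t\<in>T. x t = a * exp (c * t) \<and> y t = b * exp (- c * t)) \<and>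
        (\<forall>u\<in>D. \<phi> u = 2 * a * b * (1 - exp (- c * u))))))"
proof -
  have isT: "is_interval T" and xm: "mono_on T x" and ym: "\<forall>s\<in>T. \<forall>t\<in>T. s \<le> t \<longrightarrow> y t \<le> y s"
    and cx: "continuous_on T x" and cy: "continuous_on T y"
    and pos: "\<forall>t\<in>interior T. x t > 0 \<and> y t > 0"
    and nc: "\<not> (\<exists>k. \<forall>t\<in>T. x t = k) \<or> \<not> (\<exists>k. \<forall>t\<in>T. y t = k)"
    using assms(1) unfolding decreasing_path_def by auto
  have cT: "convex T" using isT by (simp add: is_interval_convex_1)
  have "\<exists>p q. p \<in> T \<and> q \<in> T \<and> p < q"
  proof (rule ccontr)
    assume H: "\<not> (\<exists>p q. p \<in> T \<and> q \<in> T \<and> p < q)"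
    have all_eq: "p = q" if "p \<in> T" "q \<in> T" for p q
      using H that by (metis linorder_neqE_linordered_idom)
    have "(\<exists>k. \<forall>t\<in>T. x t = k) \<and> (\<exists>k. \<forall>t\<in>T. y t = k)"
    proof (cases "T = {}")
      case True then show ?thesis by simp
    next
      case False
      then obtain c where c: "c \<in> T" by blast
      have "\<forall>t\<in>T. x t = x c" "\<forall>t\<in>T. y t = y c" using all_eq c by auto
      then show ?thesis by blast
    qed
    then show False using nc by blast
  qed
  then obtain p q where pq: "p \<in> T" "q \<in> T" "p < q" by blast
  have "{p<..<q} \<subseteq> T"
  proof
    fix z assume "z \<in> {p<..<q}"
    then show "z \<in> T" using mem_is_interval_1_I[OF isT pq(1,2), of z] by simp
  qed
  then have "{p<..<q} \<subseteq> interior T" by (rule interior_maximal) simp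
  moreover have "(p + q) / 2 \<in> {p<..<q}" using pq by simp
  ultimately have neI: "interior T \<noteq> {}" by blast
  have Iint: "is_interval (interior T)" using convex_interior[OF cT] by (simp add: is_interval_convex_1)
  have key: "shapes T (interior T) x y" if pe: "path_eq T x y \<phi>" for \<phi>
  proof -
    interpret dp "interior T" x y \<phi>
    proof unfold_locales
      show "open (interior T)" by simp
      show "is_interval (interior T)" by (rule Iint)
      fix a b assume ab: "a \<in> interior T" "b \<in> interior T" "a \<le> b"
      then have "a \<in> T" "b \<in> T" using interior_subset by auto
      then show "x a \<le> x b" "y b \<le> y a" using xm ym ab(3) unfolding mono_on_def by auto
    next
      show "continuous_on (interior T) x" using continuous_on_subset[OF cx interior_subset] .
      show "continuous_on (interior T) y" using continuous_on_subset[OF cy interior_subset] .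
    next
      fix t assume "t \<in> interior T"
      then show "x t > 0" "y t > 0" using pos by auto
    next
      fix s t assume st: "s \<in> interior T" "t \<in> interior T" "s < t"
      then have "s \<in> T" "t \<in> T" using interior_subset by auto
      then show "x s * y s + x t * y t - 2 * x s * y t = \<phi> (t - s)" using pe st(3) unfolding path_eq_def by blast
    qed
    have ncI: "\<not> ((\<exists>k. \<forall>t\<in>interior T. x t = k) \<and> (\<exists>k. \<forall>t\<in>interior T. y t = k))"
    proof
      assume "(\<exists>k. \<forall>t\<in>interior T. x t = k) \<and> (\<exists>k. \<forall>t\<in>interior T. y t = k)"
      then obtain k1 k2 where k: "\<forall>t\<in>interior T. x t = k1" "\<forall>t\<in>interior T. y t = k2" by blast
      have "\<forall>t\<in>T. x t = k1" using ext_eq[OF cT neI cx continuous_on_const] k by blast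
      moreover have "\<forall>t\<in>T. y t = k2" using ext_eq[OF cT neI cy continuous_on_const] k by blast
      ultimately show False using nc by blast
    qed
    have "shapes (interior T) (interior T) x y" using dp_classify[OF neI ncI] .
    then show ?thesis by (rule shapes_ext[OF cT neI cx cy])
  qed
  have bk: "\<exists>\<phi>. path_eq T x y \<phi>" if sh: "shapes T (interior T) x y"
  proof -
    have "(\<exists>a b c. a > 0 \<and> c > 0 \<and>
        ((\<forall>t\<in>T. x t = a \<and> y t = b - c * t) \<or> (\<forall>t\<in>T. x t = b + c * t \<and> y t = a))) \<or>
      (\<exists>s0 a b c d. s0 \<in> interior T \<and> a > 0 \<and> b > 0 \<and> c > 0 \<and> d > 0 \<and> a * c = b * d \<and>
        (\<forall>t\<in>T. x t = a + d * (t - s0) * (if t > s0 then 1 else 0) \<and>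
                 y t = b - c * (t - s0) * (if t \<le> s0 then 1 else 0))) \<or>
      (\<exists>a b c d. b > 0 \<and> d > 0 \<and> (\<forall>t\<in>T. x t = a + b * t \<and> y t = c - d * t)) \<or>
      (\<exists>a b c. a > 0 \<and> b > 0 \<and> c > 0 \<and> (\<forall>t\<in>T. x t = a * exp (c * t) \<and> y t = b * exp (- c * t)))"
      using sh unfolding shapes_def .
    then show ?thesis
    proof (elim disjE exE conjE)
      fix a b c assume h: "\<forall>t\<in>T. x t = a \<and> y t = b - c * t"
      have "path_eq T x y (\<lambda>u. a * c * u)" unfolding path_eq_def using F1a[OF h] by blast
      then show ?thesis by blast
    next
      fix a b c assume h: "\<forall>t\<in>T. x t = b + c * t \<and> y t = a"
      have "path_eq T x y (\<lambda>u. a * c * u)" unfolding path_eq_def using F1b[OF h] by blast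
      then show ?thesis by blast
    next
      fix s0 a b c d assume h1: "a * c = b * d" and h: "\<forall>t\<in>T. x t = a + d * (t - s0) * (if t > s0 then 1 else 0) \<and>
                 y t = b - c * (t - s0) * (if t \<le> s0 then 1 else 0)"
      have "path_eq T x y (\<lambda>u. a * c * u)" unfolding path_eq_def using F2[OF h h1] by blast
      then show ?thesis by blast
    next
      fix a b c d assume h: "\<forall>t\<in>T. x t = a + b * t \<and> y t = c - d * t"
      have "path_eq T x y (\<lambda>u. (a * d + b * c) * u - b * d * u\<^sup>2)" unfolding path_eq_def using F3[OF h] by blast
      then show ?thesis by blast
    next
      fix a b c assume h: "\<forall>t\<in>T. x t = a * exp (c * t) \<and> y t = b * exp (- c * t)"
      have "path_eq T x y (\<lambda>u. 2 * a * b * (1 - exp (- c * u)))" unfolding path_eq_def using F4[OF h] by blast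
      then show ?thesis by blast
    qed
  qed
  have Dm: "\<exists>s t. s \<in> T \<and> t \<in> T \<and> s < t \<and> u = t - s" if "u \<in> D" for u
    using that unfolding D_def by blast
  have fwd: "((\<exists>a b c. a > 0 \<and> c > 0 \<and>
        ((\<forall>t\<in>T. x t = a \<and> y t = b - c * t) \<or> (\<forall>t\<in>T. x t = b + c * t \<and> y t = a)) \<and>
        (\<forall>u\<in>D. \<phi> u = a * c * u)) \<or>
      (\<exists>s0 a b c d. s0 \<in> interior T \<and> a > 0 \<and> b > 0 \<and> c > 0 \<and> d > 0 \<and> a * c = b * d \<and>
        (\<forall>t\<in>T. x t = a + d * (t - s0) * (if t > s0 then 1 else 0) \<and>
                 y t = b - c * (t - s0) * (if t \<le> s0 then 1 else 0)) \<and>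
        (\<forall>u\<in>D. \<phi> u = a * c * u)) \<or>
      (\<exists>a b c d. b > 0 \<and> d > 0 \<and> (\<forall>t\<in>T. x t = a + b * t \<and> y t = c - d * t) \<and>
        (\<forall>u\<in>D. \<phi> u = (a * d + b * c) * u - b * d * u\<^sup>2)) \<or>
      (\<exists>a b c. a > 0 \<and> b > 0 \<and> c > 0 \<and> (\<forall>t\<in>T. x t = a * exp (c * t) \<and> y t = b * exp (- c * t)) \<and>
        (\<forall>u\<in>D. \<phi> u = 2 * a * b * (1 - exp (- c * u)))))"
    if pe: "path_eq T x y \<phi>" for \<phi>
  proof -
    have PF: "\<phi> (t - s) = x s * y s + x t * y t - 2 * x s * y t" if "s \<in> T" "t \<in> T" "s < t" for s t
      using pe that unfolding path_eq_def by simp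
    have "(\<exists>a b c. a > 0 \<and> c > 0 \<and>
        ((\<forall>t\<in>T. x t = a \<and> y t = b - c * t) \<or> (\<forall>t\<in>T. x t = b + c * t \<and> y t = a))) \<or>
      (\<exists>s0 a b c d. s0 \<in> interior T \<and> a > 0 \<and> b > 0 \<and> c > 0 \<and> d > 0 \<and> a * c = b * d \<and>
        (\<forall>t\<in>T. x t = a + d * (t - s0) * (if t > s0 then 1 else 0) \<and>
                 y t = b - c * (t - s0) * (if t \<le> s0 then 1 else 0))) \<or>
      (\<exists>a b c d. b > 0 \<and> d > 0 \<and> (\<forall>t\<in>T. x t = a + b * t \<and> y t = c - d * t)) \<or>
      (\<exists>a b c. a > 0 \<and> b > 0 \<and> c > 0 \<and> (\<forall>t\<in>T. x t = a * exp (c * t) \<and> y t = b * exp (- c * t)))"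
      using key[OF pe] unfolding shapes_def .
    then show ?thesis
    proof (elim disjE exE conjE)
      fix a b c assume a0: "a > 0" and c0: "c > 0" and h: "\<forall>t\<in>T. x t = a \<and> y t = b - c * t"
      have "\<forall>u\<in>D. \<phi> u = a * c * u"
      proof
        fix u assume "u \<in> D"
        then obtain s t where st: "s \<in> T" "t \<in> T" "s < t" "u = t - s" using Dm by blast
        show "\<phi> u = a * c * u" using PF[OF st(1-3)] F1a[OF h st(1,2)] st(4) by simp
      qed
      then show ?thesis using a0 c0 h by (intro disjI1 exI[of _ a] exI[of _ b] exI[of _ c]) simp
    next
      fix a b c assume a0: "a > 0" and c0: "c > 0" and h: "\<forall>t\<in>T. x t = b + c * t \<and> y t = a"
      have "\<forall>u\<in>D. \<phi> u = a * c * u"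
      proof
        fix u assume "u \<in> D"
        then obtain s t where st: "s \<in> T" "t \<in> T" "s < t" "u = t - s" using Dm by blast
        show "\<phi> u = a * c * u" using PF[OF st(1-3)] F1b[OF h st(1,2)] st(4) by simp
      qed
      then show ?thesis using a0 c0 h by (intro disjI1 exI[of _ a] exI[of _ b] exI[of _ c]) simp
    next
      fix s0 a b c d assume s0: "s0 \<in> interior T" and pos: "a > 0" "b > 0" "c > 0" "d > 0" and h1: "a * c = b * d"
        and h: "\<forall>t\<in>T. x t = a + d * (t - s0) * (if t > s0 then 1 else 0) \<and>
                 y t = b - c * (t - s0) * (if t \<le> s0 then 1 else 0)"
      have "\<forall>u\<in>D. \<phi> u = a * c * u"
      proof
        fix u assume "u \<in> D"
        then obtain s t where st: "s \<in> T" "t \<in> T" "s < t" "u = t - s" using Dm by blast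
        show "\<phi> u = a * c * u" using PF[OF st(1-3)] F2[OF h h1 st(1-3)] st(4) by simp
      qed
      then show ?thesis using s0 pos h1 h
        by (intro disjI2 disjI1 exI[of _ s0] exI[of _ a] exI[of _ b] exI[of _ c] exI[of _ d]) simp
    next
      fix a b c d assume b0: "b > 0" and d0: "d > 0" and h: "\<forall>t\<in>T. x t = a + b * t \<and> y t = c - d * t"
      have "\<forall>u\<in>D. \<phi> u = (a * d + b * c) * u - b * d * u\<^sup>2"
      proof
        fix u assume "u \<in> D"
        then obtain s t where st: "s \<in> T" "t \<in> T" "s < t" "u = t - s" using Dm by blast
        show "\<phi> u = (a * d + b * c) * u - b * d * u\<^sup>2" using PF[OF st(1-3)] F3[OF h st(1,2)] st(4) by simp
      qed
      then show ?thesis using b0 d0 h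
        by (intro disjI2 disjI2 disjI1 exI[of _ a] exI[of _ b] exI[of _ c] exI[of _ d]) simp
    next
      fix a b c assume pos: "a > 0" "b > 0" "c > 0" and h: "\<forall>t\<in>T. x t = a * exp (c * t) \<and> y t = b * exp (- c * t)"
      have "\<forall>u\<in>D. \<phi> u = 2 * a * b * (1 - exp (- c * u))"
      proof
        fix u assume "u \<in> D"
        then obtain s t where st: "s \<in> T" "t \<in> T" "s < t" "u = t - s" using Dm by blast
        show "\<phi> u = 2 * a * b * (1 - exp (- c * u))" using PF[OF st(1-3)] F4[OF h st(1,2)] st(4) by simp
      qed
      then show ?thesis using pos h
        by (intro disjI2 disjI2 disjI2 exI[of _ a] exI[of _ b] exI[of _ c]) simp
    qed
  qed
  have iff0: "(\<exists>\<phi>. path_eq T x y \<phi>) \<longleftrightarrow> shapes T (interior T) x y"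
    using key bk by blast
  show ?thesis
    using iff0 fwd unfolding shapes_def by blast
qed

end
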